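(* Let $(G_n)_{n\in\mathbb{N}}$ be an $\mathrm{FO}$-convergent sequence of finite graphs with a modeling limit $L$, and let $\xi(x)$ be a formula in the language of graphs with one free variable that is algebraic in $L$, with $\xi(L)\neq\emptyset$. Then there exist a sequence $(r_n)_{n\in\mathbb{N}}$ with $r_n\in V(G_n)$ and a vertex $r\in\xi(L)$ such that $(G_n,r_n)$ $\mathrm{FO}$-converges to $(L,r)$, i.e. $\lim_{n\to\infty}\langle\phi,(G_n,r_n)\rangle=\langle\phi,(L,r)\rangle$ for every first-order formula $\phi$ in the language of rooted graphs.
   Context: Graphs are first-order structures in the language with one binary (edge) relation. For a formula $\phi$ with $p$ free variables and a structure $G$, $\phi(G)=\{\mathbf{v}\in V(G)^p : G\models\phi(\mathbf{v})\}$. The Stone pairing of $\phi$ ($p\ge1$) with a finite graph $G$ is $\langle\phi,G\rangle=|\phi(G)|/|V(G)|^p$; for sentences it is $1$ if $G\models\phi$ and $0$ otherwise. A sequence of finite graphs is $\mathrm{FO}$-convergent if $(\langle\phi,G_n\rangle)$ converges for every formula $\phi$. A modeling is a graph $L$ whose vertex set is a standard Borel space with a probability measure $\nu$ such that every first-order definable set $\phi(L)\subseteq V(L)^p$ is measurable; $\langle\phi,L\rangle=\nu^{\otimes p}(\phi(L))$ (and $1$/$0$ for sentences). $L$ is a modeling limit of $(G_n)$ if $\lim_n\langle\phi,G_n\rangle=\langle\phi,L\rangle$ for all $\phi$. The language of rooted graphs adds a constant symbol $\mathrm{Root}$; $(G,r)$ is $G$ with $\mathrm{Root}$ interpreted as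 $r$, and Stone pairings with rooted structures are defined in the same way. A formula $\xi(x)$ is algebraic in $L$ if $\xi(L)$ is finite. *)

theory Defs
  imports "HOL-Probability.Probability"
begin

text \<open>Terms: variables (indexed by nat) and the constant symbol Root
  (only allowed in the language of rooted graphs).\<close>
datatype tm = Var nat | Root

datatype fm = Eq tm tm | Adj tm tm | Neg fm | Conj fm fm | Ex nat fm

fun tm_vars :: "tm \<Rightarrow> nat set" where
  "tm_vars (Var x) = {x}"
| "tm_vars Root = {}"

fun fv :: "fm \<Rightarrow> nat set" where
  "fv (Eq s t) = tm_vars s \<union> tm_vars t"
| "fv (Adj s t) = tm_vars s \<union> tm_vars t"
| "fv (Neg \<phi>) = fv \<phi>"
| "fv (Conj \<phi> \<psi>) = fv \<phi> \<union> fv \<psi>"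
| "fv (Ex x \<phi>) = fv \<phi> - {x}"

fun tm_has_root :: "tm \<Rightarrow> bool" where
  "tm_has_root (Var x) = False"
| "tm_has_root Root = True"

fun graph_fm :: "fm \<Rightarrow> bool" where
  "graph_fm (Eq s t) = (\<not> tm_has_root s \<and> \<not> tm_has_root t)"
| "graph_fm (Adj s t) = (\<not> tm_has_root s \<and> \<not> tm_has_root t)"
| "graph_fm (Neg \<phi>) = graph_fm \<phi>"
| "graph_fm (Conj \<phi> \<psi>) = (graph_fm \<phi> \<and> graph_fm \<psi>)"
| "graph_fm (Ex x \<phi>) = graph_fm \<phi>"

fun eval_tm :: "'a \<Rightarrow> (nat \<Rightarrow> 'a) \<Rightarrow> tm \<Rightarrow> 'a" where
  "eval_tm r a (Var x) = a x"
| "eval_tm r a Root = r"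

text \<open>Satisfaction in the structure with vertex set V, edge relation E,
  Root interpreted by r, under assignment a.  For formulas of the language
  of graphs the value of r is irrelevant.\<close>
fun sat :: "'a set \<Rightarrow> ('a \<Rightarrow> 'a \<Rightarrow> bool) \<Rightarrow> 'a \<Rightarrow> (nat \<Rightarrow> 'a) \<Rightarrow> fm \<Rightarrow> bool" where
  "sat V E r a (Eq s t) = (eval_tm r a s = eval_tm r a t)"
| "sat V E r a (Adj s t) = E (eval_tm r a s) (eval_tm r a t)"
| "sat V E r a (Neg \<phi>) = (\<not> sat V E r a \<phi>)"
| "sat V E r a (Conj \<phi> \<psi>) = (sat V E r a \<phi> \<and> sat V E r a \<psi>)"
| "sat V E r a (Ex x \<phi>) = (\<exists>v\<in>V. sat V E r (a(x := v)) \<phi>)"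

definition is_graph :: "'a set \<Rightarrow> ('a \<Rightarrow> 'a \<Rightarrow> bool) \<Rightarrow> bool" where
  "is_graph V E \<longleftrightarrow> (\<forall>u\<in>V. \<forall>v\<in>V. E u v \<longleftrightarrow> E v u) \<and> (\<forall>v\<in>V. \<not> E v v)"

text \<open>The definable set phi(G), as a set of assignments of the free
  variables of phi (extensional functions on fv phi).\<close>
definition defset :: "'a set \<Rightarrow> ('a \<Rightarrow> 'a \<Rightarrow> bool) \<Rightarrow> 'a \<Rightarrow> fm \<Rightarrow> (nat \<Rightarrow> 'a) set" where
  "defset V E r \<phi> = {a \<in> fv \<phi> \<rightarrow>\<^sub>E V. sat V E r a \<phi>}"

definition stone_fin :: "'a set \<Rightarrow> ('a \<Rightarrow> 'a \<Rightarrow> bool) \<Rightarrow> 'a \<Rightarrow> fm \<Rightarrow> real" where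
  "stone_fin V E r \<phi> = real (card (defset V E r \<phi>)) / real (card V) ^ card (fv \<phi>)"

text \<open>For sentences
  the product over the empty index set is the one-point probability space.\<close>
definition stone_mod :: "'b measure \<Rightarrow> ('b \<Rightarrow> 'b \<Rightarrow> bool) \<Rightarrow> 'b \<Rightarrow> fm \<Rightarrow> real" where
  "stone_mod M E r \<phi> = measure (PiM (fv \<phi>) (\<lambda>_. M)) (defset (space M) E r \<phi>)"

definition definable_measurable ::
    "(fm \<Rightarrow> bool) \<Rightarrow> 'b measure \<Rightarrow> ('b \<Rightarrow> 'b \<Rightarrow> bool) \<Rightarrow> 'b \<Rightarrow> bool" where
  "definable_measurable P M E r \<longleftrightarrow>
     (\<forall>\<phi>. P \<phi> \<longrightarrow> defset (space M) E r \<phi> \<in> sets (PiM (fv \<phi>) (\<lambda>_. M)))"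

text \<open>A modeling: vertex set a standard Borel space (here: a Polish space with
  its Borel sigma-algebra), a probability measure, and all first-order
  definable sets (language of graphs) measurable.\<close>
definition is_modeling :: "('b::polish_space) measure \<Rightarrow> ('b \<Rightarrow> 'b \<Rightarrow> bool) \<Rightarrow> bool" where
  "is_modeling M E \<longleftrightarrow> sets M = sets borel \<and> prob_space M \<and> is_graph (space M) E
     \<and> definable_measurable graph_fm M E undefined"

end

theory Submission
  imports Defs
begin

fun rn_tm :: "(nat \<Rightarrow> nat) \<Rightarrow> tm \<Rightarrow> tm" where
  "rn_tm f (Var x) = Var (f x)"
| "rn_tm f Root = Root"

fun rn :: "(nat \<Rightarrow> nat) \<Rightarrow> fm \<Rightarrow> fm" where
  "rn f (Eq s t) = Eq (rn_tm f s) (rn_tm f t)"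
| "rn f (Adj s t) = Adj (rn_tm f s) (rn_tm f t)"
| "rn f (Neg \<phi>) = Neg (rn f \<phi>)"
| "rn f (Conj \<phi> \<psi>) = Conj (rn f \<phi>) (rn f \<psi>)"
| "rn f (Ex x \<phi>) = Ex (f x) (rn f \<phi>)"

lemma eval_rn_tm: "eval_tm r a (rn_tm f s) = eval_tm r (a \<circ> f) s"
  by (cases s) auto

lemma tm_vars_rn: "tm_vars (rn_tm f s) = f ` tm_vars s"
  by (cases s) auto

lemma sat_rn: "inj f \<Longrightarrow> sat V E r a (rn f \<phi>) = sat V E r (a \<circ> f) \<phi>"
proof (induction \<phi> arbitrary: a)
  case (Ex x \<phi>)
  have "\<And>v. (a(f x := v)) \<circ> f = (a \<circ> f)(x := v)"
    using Ex.prems by (auto simp: fun_eq_iff inj_eq)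
  then show ?case by (simp only: rn.simps sat.simps Ex.IH[OF Ex.prems])
qed (auto simp: eval_rn_tm)

lemma fv_rn: "inj f \<Longrightarrow> fv (rn f \<phi>) = f ` fv \<phi>"
  by (induction \<phi>) (auto simp: tm_vars_rn image_Un inj_eq)

lemma graph_rn_tm: "tm_has_root (rn_tm f s) = tm_has_root s"
  by (cases s) auto

lemma graph_rn: "graph_fm (rn f \<phi>) = graph_fm \<phi>"
  by (induction \<phi>) (auto simp: graph_rn_tm)

fun sr_tm :: "nat \<Rightarrow> tm \<Rightarrow> tm" where
  "sr_tm y (Var x) = Var x"
| "sr_tm y Root = Var y"

fun sr :: "nat \<Rightarrow> fm \<Rightarrow> fm" where
  "sr y (Eq s t) = Eq (sr_tm y s) (sr_tm y t)"
| "sr y (Adj s t) = Adj (sr_tm y s) (sr_tm y t)"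
| "sr y (Neg \<phi>) = Neg (sr y \<phi>)"
| "sr y (Conj \<phi> \<psi>) = Conj (sr y \<phi>) (sr y \<psi>)"
| "sr y (Ex x \<phi>) = Ex x (sr y \<phi>)"

fun bv :: "fm \<Rightarrow> nat set" where
  "bv (Eq s t) = {}"
| "bv (Adj s t) = {}"
| "bv (Neg \<phi>) = bv \<phi>"
| "bv (Conj \<phi> \<psi>) = bv \<phi> \<union> bv \<psi>"
| "bv (Ex x \<phi>) = insert x (bv \<phi>)"

lemma eval_sr_tm: "eval_tm r a (sr_tm y s) = eval_tm (a y) a s"
  by (cases s) auto

lemma sat_sr: "y \<notin> bv \<phi> \<Longrightarrow> sat V E r a (sr y \<phi>) = sat V E (a y) a \<phi>"
  by (induction \<phi> arbitrary: a) (auto simp: eval_sr_tm)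

lemma fv_sr1: "fv \<phi> \<subseteq> fv (sr y \<phi>)"
proof (induction \<phi>)
  case (Eq s t) then show ?case by (cases s; cases t) auto
next
  case (Adj s t) then show ?case by (cases s; cases t) auto
qed auto

lemma fv_sr2: "y \<notin> bv \<phi> \<Longrightarrow> fv (sr y \<phi>) \<subseteq> insert y (fv \<phi>)"
proof (induction \<phi>)
  case (Eq s t) then show ?case by (cases s; cases t) auto
next
  case (Adj s t) then show ?case by (cases s; cases t) auto
qed auto

lemma graph_sr: "graph_fm (sr y \<phi>)"
proof (induction \<phi>)
  case (Eq s t) then show ?case by (cases s; cases t) auto
next
  case (Adj s t) then show ?case by (cases s; cases t) auto
qed auto

lemma sat_fv: "(\<And>z. z \<in> fv \<phi> \<Longrightarrow> a z = b z) \<Longrightarrow> sat V E r a \<phi> = sat V E r b \<phi>"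
proof (induction \<phi> arbitrary: a b)
  case (Eq s t) then show ?case by (cases s; cases t) auto
next
  case (Adj s t) then show ?case by (cases s; cases t) auto
next
  case (Neg \<phi>)
  have "sat V E r a \<phi> = sat V E r b \<phi>" by (rule Neg.IH) (use Neg.prems in simp)
  then show ?case by simp
next
  case (Conj \<phi> \<psi>)
  have "sat V E r a \<phi> = sat V E r b \<phi>" by (rule Conj.IH(1)) (use Conj.prems in simp)
  moreover have "sat V E r a \<psi> = sat V E r b \<psi>" by (rule Conj.IH(2)) (use Conj.prems in simp)
  ultimately show ?case by simp
next
  case (Ex x \<phi>)
  have "\<And>v. sat V E r (a(x:=v)) \<phi> = sat V E r (b(x:=v)) \<phi>"
    by (rule Ex.IH) (use Ex.prems in auto)
  then show ?case by simp
qed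

lemma sat_graph_root: "graph_fm \<phi> \<Longrightarrow> sat V E r a \<phi> = sat V E r' a \<phi>"
proof (induction \<phi> arbitrary: a)
  case (Eq s t) then show ?case by (cases s; cases t) auto
next
  case (Adj s t) then show ?case by (cases s; cases t) auto
qed auto

fun vbt :: "tm \<Rightarrow> nat" where
  "vbt (Var x) = Suc x"
| "vbt Root = 0"

fun vb :: "fm \<Rightarrow> nat" where
  "vb (Eq s t) = max (vbt s) (vbt t)"
| "vb (Adj s t) = max (vbt s) (vbt t)"
| "vb (Neg \<phi>) = vb \<phi>"
| "vb (Conj \<phi> \<psi>) = max (vb \<phi>) (vb \<psi>)"
| "vb (Ex x \<phi>) = max (Suc x) (vb \<phi>)"

lemma fv_vb: "z \<in> fv \<phi> \<Longrightarrow> z < vb \<phi>"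
proof (induction \<phi>)
  case (Eq s t) then show ?case by (cases s; cases t) auto
next
  case (Adj s t) then show ?case by (cases s; cases t) auto
qed auto

lemma bv_vb: "z \<in> bv \<phi> \<Longrightarrow> z < vb \<phi>"
  by (induction \<phi>) auto

lemma vb_notin: "vb \<phi> \<notin> fv \<phi>" "vb \<phi> \<notin> bv \<phi>"
  using fv_vb bv_vb by blast+

lemma defset_graph_root: "graph_fm \<phi> \<Longrightarrow> defset V E r \<phi> = defset V E r' \<phi>"
  using sat_graph_root[of \<phi> V E r _ r'] by (auto simp: defset_def)

lemma finite_tm_vars: "finite (tm_vars s)" by (cases s) auto

lemma finite_fv: "finite (fv \<phi>)"
  by (induction \<phi>) (auto simp: finite_tm_vars)

lemma space_PiN: "space (PiM I (\<lambda>_. N)) = I \<rightarrow>\<^sub>E space N"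
  by (simp add: space_PiM)

lemma stone_mod_range:
  assumes "prob_space N"
  shows "0 \<le> stone_mod N E r \<phi>" "stone_mod N E r \<phi> \<le> 1"
proof -
  interpret P: prob_space "PiM (fv \<phi>) (\<lambda>_. N)" by (rule prob_space_PiM) (use assms in auto)
  show "0 \<le> stone_mod N E r \<phi>" by (simp add: stone_mod_def)
  show "stone_mod N E r \<phi> \<le> 1" by (simp add: stone_mod_def)
qed

lemma stone_mod_neg:
  assumes "prob_space N" and m: "defset (space N) E r \<phi> \<in> sets (PiM (fv \<phi>) (\<lambda>_. N))"
  shows "stone_mod N E r (Neg \<phi>) = 1 - stone_mod N E r \<phi>"
proof -
  interpret P: prob_space "PiM (fv \<phi>) (\<lambda>_. N)" by (rule prob_space_PiM) (use assms in auto)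
  have "defset (space N) E r (Neg \<phi>) = space (PiM (fv \<phi>) (\<lambda>_. N)) - defset (space N) E r \<phi>"
    by (auto simp: defset_def space_PiN)
  then show ?thesis using P.prob_compl[OF m] by (simp add: stone_mod_def)
qed

lemma stone_mod_rn:
  assumes N: "prob_space N" and f: "inj f" and m: "defset (space N) E r \<phi> \<in> sets (PiM (fv \<phi>) (\<lambda>_. N))"
  shows "stone_mod N E r (rn f \<phi>) = stone_mod N E r \<phi>"
proof -
  let ?I = "fv \<phi>" let ?K = "f ` fv \<phi>"
  let ?t = "\<lambda>\<omega>. \<lambda>n\<in>?I. \<omega> (f n)"
  have tm: "?t \<in> measurable (PiM ?K (\<lambda>_. N)) (PiM ?I (\<lambda>_. N))"
    apply (rule measurable_restrict)
    apply (rule measurable_component_singleton) by simp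
  have d: "distr (PiM ?K (\<lambda>_. N)) (PiM ?I (\<lambda>_. N)) ?t = PiM ?I (\<lambda>_. N)"
  proof (rule distr_PiM_reindex)
    show "inj_on f ?I" using f by (meson inj_on_subset subset_UNIV)
    show "f \<in> ?I \<rightarrow> ?K" by blast
    show "\<And>i. i \<in> ?K \<Longrightarrow> prob_space N" using N .
  qed
  have eq: "defset (space N) E r (rn f \<phi>) = ?t -` defset (space N) E r \<phi> \<inter> space (PiM ?K (\<lambda>_. N))"
  proof -
    have "sat (space N) E r (a \<circ> f) \<phi> = sat (space N) E r (?t a) \<phi>" for a
      by (rule sat_fv) auto
    then show ?thesis
      by (auto simp: defset_def space_PiN fv_rn[OF f] sat_rn[OF f] PiE_iff extensional_def)
  qed
  have "stone_mod N E r (rn f \<phi>) = measure (PiM ?K (\<lambda>_. N)) (defset (space N) E r (rn f \<phi>))"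
    by (simp add: stone_mod_def fv_rn[OF f])
  also have "\<dots> = measure (PiM ?I (\<lambda>_. N)) (defset (space N) E r \<phi>)"
    unfolding eq by (subst measure_distr[OF tm m, symmetric]) (simp add: d)
  finally show ?thesis by (simp add: stone_mod_def)
qed

lemma stone_mod_conj:
  assumes N: "prob_space N" and dis: "fv \<phi> \<inter> fv \<psi> = {}"
    and m1: "defset (space N) E r \<phi> \<in> sets (PiM (fv \<phi>) (\<lambda>_. N))"
    and m2: "defset (space N) E r \<psi> \<in> sets (PiM (fv \<psi>) (\<lambda>_. N))"
    and m3: "defset (space N) E r (Conj \<phi> \<psi>) \<in> sets (PiM (fv (Conj \<phi> \<psi>)) (\<lambda>_. N))"
  shows "stone_mod N E r (Conj \<phi> \<psi>) = stone_mod N E r \<phi> * stone_mod N E r \<psi>"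
proof -
  let ?I = "fv \<phi>" let ?J = "fv \<psi>"
  interpret PS: product_sigma_finite "\<lambda>_. N"
    unfolding product_sigma_finite_def using N prob_space_imp_sigma_finite by blast
  interpret P1: prob_space "PiM ?I (\<lambda>_. N)" by (rule prob_space_PiM) (rule N)
  interpret P2: prob_space "PiM ?J (\<lambda>_. N)" by (rule prob_space_PiM) (rule N)
  have fin: "finite ?I" "finite ?J" by (rule finite_fv)+
  have d: "distr (PiM ?I (\<lambda>_. N) \<Otimes>\<^sub>M PiM ?J (\<lambda>_. N)) (PiM (?I \<union> ?J) (\<lambda>_. N)) (merge ?I ?J) = PiM (?I \<union> ?J) (\<lambda>_. N)"
    by (rule PS.distr_merge[OF dis fin])
  let ?A = "defset (space N) E r \<phi>" let ?B = "defset (space N) E r \<psi>"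
  have s1: "sat (space N) E r (merge ?I ?J (x, y)) \<phi> = sat (space N) E r x \<phi>" for x y
      by (rule sat_fv) (use dis in \<open>auto simp: merge_def\<close>)
  have s2: "sat (space N) E r (merge ?I ?J (x, y)) \<psi> = sat (space N) E r y \<psi>" for x y
      by (rule sat_fv) (use dis in \<open>auto simp: merge_def\<close>)
  have eq: "merge ?I ?J -` defset (space N) E r (Conj \<phi> \<psi>) \<inter> space (PiM ?I (\<lambda>_. N) \<Otimes>\<^sub>M PiM ?J (\<lambda>_. N)) = ?A \<times> ?B"
  proof (intro set_eqI iffI)
    fix z assume z: "z \<in> merge ?I ?J -` defset (space N) E r (Conj \<phi> \<psi>) \<inter> space (PiM ?I (\<lambda>_. N) \<Otimes>\<^sub>M PiM ?J (\<lambda>_. N))"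
    obtain x y where xy: "z = (x, y)" by force
    show "z \<in> ?A \<times> ?B" using z s1[of x y] s2[of x y] unfolding xy
      by (simp add: defset_def space_pair_measure space_PiN)
  next
    fix z assume z: "z \<in> ?A \<times> ?B"
    obtain x y where xy: "z = (x, y)" by force
    have "merge ?I ?J (x, y) \<in> (?I \<union> ?J) \<rightarrow>\<^sub>E space N"
      using z dis unfolding xy by (auto simp: defset_def PiE_iff merge_def extensional_def)
    then show "z \<in> merge ?I ?J -` defset (space N) E r (Conj \<phi> \<psi>) \<inter> space (PiM ?I (\<lambda>_. N) \<Otimes>\<^sub>M PiM ?J (\<lambda>_. N))"
      using z s1[of x y] s2[of x y] unfolding xy
      by (simp add: defset_def space_pair_measure space_PiN)
  qed
  have "stone_mod N E r (Conj \<phi> \<psi>) = measure (PiM (?I \<union> ?J) (\<lambda>_. N)) (defset (space N) E r (Conj \<phi> \<psi>))"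
    by (simp add: stone_mod_def)
  also have "\<dots> = measure (PiM ?I (\<lambda>_. N) \<Otimes>\<^sub>M PiM ?J (\<lambda>_. N)) (?A \<times> ?B)"
    apply (subst d[symmetric])
    apply (subst measure_distr)
    using m3 by (simp_all add: eq)
  also have "\<dots> = measure (PiM ?I (\<lambda>_. N)) ?A * measure (PiM ?J (\<lambda>_. N)) ?B"
    using P2.emeasure_pair_measure_Times[OF m1 m2]
    by (simp add: measure_def enn2real_mult)
  finally show ?thesis by (simp add: stone_mod_def)
qed

lemma stone_mod_sentence:
  assumes "fv \<phi> = {}"
  shows "stone_mod N E r \<phi> = (if sat (space N) E r (\<lambda>_. undefined) \<phi> then 1 else 0)"
proof -
  have "defset (space N) E r \<phi> = (if sat (space N) E r (\<lambda>_. undefined) \<phi> then {\<lambda>_. undefined} else {})"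
    using assms by (auto simp: defset_def)
  then show ?thesis using assms by (simp add: stone_mod_def PiM_empty)
qed

lemma stone_fin_sentence:
  assumes "fv \<phi> = {}"
  shows "stone_fin V E r \<phi> = (if sat V E r (\<lambda>_. undefined) \<phi> then 1 else 0)"
proof -
  have "defset V E r \<phi> = (if sat V E r (\<lambda>_. undefined) \<phi> then {\<lambda>_. undefined} else {})"
    using assms by (auto simp: defset_def)
  then show ?thesis using assms by (simp add: stone_fin_def)
qed

lemma singleton_PiE: "x \<in> I \<rightarrow>\<^sub>E V \<Longrightarrow> {x} = PiE I (\<lambda>i. {x i})"
  by (auto simp: PiE_iff extensional_def fun_eq_iff) metis

lemma ucm_sets_all:
  assumes V: "finite V" and D: "D \<subseteq> I \<rightarrow>\<^sub>E V" and I: "finite I"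
  shows "D \<in> sets (PiM I (\<lambda>_. uniform_count_measure V))"
proof (rule sets.countable)
  show "countable D" using D V I
    by (meson countable_finite finite_PiE finite_subset)
  fix a assume "a \<in> D"
  then have a: "a \<in> I \<rightarrow>\<^sub>E V" using D by blast
  show "{a} \<in> sets (PiM I (\<lambda>_. uniform_count_measure V))"
    unfolding singleton_PiE[OF a]
    by (rule sets_PiM_I_finite[OF I]) (use a in \<open>auto simp: sets_uniform_count_measure PiE_iff\<close>)
qed

lemma defmeas_ucm:
  assumes "finite V"
  shows "definable_measurable P (uniform_count_measure V) E r"
  unfolding definable_measurable_def
  by (auto intro!: ucm_sets_all assms finite_fv simp: defset_def space_uniform_count_measure)

lemma stone_fin_eq:
  assumes V: "finite V" "V \<noteq> {}"
  shows "stone_fin V E r \<phi> = stone_mod (uniform_count_measure V) E r \<phi>"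
proof -
  let ?N = "uniform_count_measure V" let ?I = "fv \<phi>"
  let ?D = "defset V E r \<phi>"
  interpret PS: product_sigma_finite "\<lambda>_. ?N"
    unfolding product_sigma_finite_def
    using prob_space_uniform_count_measure[OF V] prob_space_imp_sigma_finite by blast
  interpret P: prob_space "PiM ?I (\<lambda>_. ?N)"
    by (rule prob_space_PiM) (rule prob_space_uniform_count_measure[OF V])
  have I: "finite ?I" by (rule finite_fv)
  have DV: "?D \<subseteq> ?I \<rightarrow>\<^sub>E V" by (auto simp: defset_def)
  have Dfin: "finite ?D" using DV V I by (meson finite_PiE finite_subset)
  have pt: "measure (PiM ?I (\<lambda>_. ?N)) {a} = (1 / real (card V)) ^ card ?I" if a: "a \<in> ?I \<rightarrow>\<^sub>E V" for a
  proof -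
    have "emeasure (PiM ?I (\<lambda>_. ?N)) {a} = (\<Prod>i\<in>?I. emeasure ?N {a i})"
      unfolding singleton_PiE[OF a]
      by (rule PS.emeasure_PiM[OF I]) (use a in \<open>auto simp: sets_uniform_count_measure PiE_iff\<close>)
    also have "\<dots> = (\<Prod>i\<in>?I. ennreal (1 / real (card V)))"
      using a V by (intro prod.cong refl) (auto simp: emeasure_uniform_count_measure PiE_iff ennreal_of_nat_eq_real_of_nat divide_ennreal)
    finally show ?thesis
      using ennreal_power[of "1 / real (card V)" "card ?I"] by (simp add: measure_def)
  qed
  have "stone_mod ?N E r \<phi> = measure (PiM ?I (\<lambda>_. ?N)) ?D"
    by (simp add: stone_mod_def space_uniform_count_measure)
  also have "\<dots> = (\<Sum>a\<in>?D. measure (PiM ?I (\<lambda>_. ?N)) {a})"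
  proof (rule measure_eq_sum_singleton[OF Dfin])
    fix a assume "a \<in> ?D"
    then have a: "a \<in> ?I \<rightarrow>\<^sub>E V" using DV by blast
    show "{a} \<in> sets (PiM ?I (\<lambda>_. ?N))" using ucm_sets_all[OF V(1) _ I, of "{a}"] a by blast
    show "emeasure (PiM ?I (\<lambda>_. ?N)) {a} \<noteq> \<infinity>" by simp
  qed
  also have "\<dots> = (\<Sum>a\<in>?D. (1 / real (card V)) ^ card ?I)"
    using DV pt by (intro sum.cong) auto
  also have "\<dots> = stone_fin V E r \<phi>"
    by (simp add: stone_fin_def power_one_over divide_inverse power_inverse)
  finally show ?thesis ..
qed

lemma defmeas_root:
  assumes dm: "definable_measurable graph_fm N E undefined" and r: "r \<in> space N"
  shows "definable_measurable (\<lambda>_. True) N E r"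
  unfolding definable_measurable_def
proof (intro allI impI)
  fix \<phi> :: fm
  let ?y = "vb \<phi>" let ?I = "fv \<phi>"
  let ?S = "space N"
  define \<phi>' where "\<phi>' = Conj (sr ?y \<phi>) (Eq (Var ?y) (Var ?y))"
  have g: "graph_fm \<phi>'" by (simp add: \<phi>'_def graph_sr)
  have fv': "fv \<phi>' = insert ?y ?I"
    using fv_sr1[of \<phi> ?y] fv_sr2[of ?y \<phi>] vb_notin by (auto simp: \<phi>'_def)
  have m': "defset ?S E undefined \<phi>' \<in> sets (PiM (insert ?y ?I) (\<lambda>_. N))"
    using dm g fv' unfolding definable_measurable_def by metis
  define h where "h = (\<lambda>a. \<lambda>i\<in>insert ?y ?I. (if i = ?y then (\<lambda>_. r) else (\<lambda>a. a i)) a)"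
  have hm: "h \<in> measurable (PiM ?I (\<lambda>_. N)) (PiM (insert ?y ?I) (\<lambda>_. N))"
    unfolding h_def
  proof (rule measurable_restrict)
    fix i assume i: "i \<in> insert ?y ?I"
    show "(if i = ?y then (\<lambda>_. r) else (\<lambda>a. a i)) \<in> measurable (PiM ?I (\<lambda>_. N)) N"
    proof (cases "i = ?y")
      case True then show ?thesis using r by simp
    next
      case False then have "i \<in> ?I" using i by blast
      then show ?thesis using False by (simp add: measurable_component_singleton)
    qed
  qed
  have eq: "defset ?S E r \<phi> = h -` defset ?S E undefined \<phi>' \<inter> space (PiM ?I (\<lambda>_. N))"
  proof (intro set_eqI iffI)
    fix a assume a: "a \<in> defset ?S E r \<phi>"
    then have aI: "a \<in> ?I \<rightarrow>\<^sub>E ?S" by (simp add: defset_def)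
    have hy: "h a ?y = r" by (simp add: h_def)
    have "sat ?S E r (h a) \<phi> = sat ?S E r a \<phi>"
      by (rule sat_fv) (use vb_notin in \<open>auto simp: h_def\<close>)
    then have "sat ?S E undefined (h a) \<phi>'"
      using a vb_notin(2)[of \<phi>] by (simp add: \<phi>'_def sat_sr hy defset_def)
    moreover have "h a \<in> fv \<phi>' \<rightarrow>\<^sub>E ?S"
      using aI r unfolding fv' by (auto simp: h_def PiE_iff)
    ultimately show "a \<in> h -` defset ?S E undefined \<phi>' \<inter> space (PiM ?I (\<lambda>_. N))"
      using aI by (simp add: defset_def space_PiN)
  next
    fix a assume a: "a \<in> h -` defset ?S E undefined \<phi>' \<inter> space (PiM ?I (\<lambda>_. N))"
    then have aI: "a \<in> ?I \<rightarrow>\<^sub>E ?S" by (simp add: space_PiN)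
    have hy: "h a ?y = r" by (simp add: h_def)
    have "sat ?S E r (h a) \<phi> = sat ?S E r a \<phi>"
      by (rule sat_fv) (use vb_notin in \<open>auto simp: h_def\<close>)
    then show "a \<in> defset ?S E r \<phi>"
      using a aI vb_notin(2)[of \<phi>] by (simp add: \<phi>'_def sat_sr hy defset_def)
  qed
  show "defset ?S E r \<phi> \<in> sets (PiM ?I (\<lambda>_. N))"
    unfolding eq by (rule measurable_sets[OF hm m'])
qed

definition Tr :: fm where "Tr = Eq Root Root"

lemma fv_Tr[simp]: "fv Tr = {}" by (simp add: Tr_def)

lemma stone_mod_Tr: "stone_mod N E r Tr = 1"
  by (simp add: stone_mod_sentence) (simp add: Tr_def)

definition conjd :: "fm \<Rightarrow> fm \<Rightarrow> fm" where
  "conjd \<phi> \<psi> = Conj \<phi> (rn (\<lambda>u. vb \<phi> + u) \<psi>)"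

lemma inj_shift: "inj (\<lambda>u::nat. k + u)" by (simp add: inj_on_def)

lemma conjd_disj: "fv \<phi> \<inter> fv (rn (\<lambda>u. vb \<phi> + u) \<psi>) = {}"
  using fv_vb[of _ \<phi>] by (auto simp: fv_rn[OF inj_shift])

lemma dm_sets: "definable_measurable (\<lambda>_. True) N E r \<Longrightarrow>
   defset (space N) E r \<phi> \<in> sets (PiM (fv \<phi>) (\<lambda>_. N))"
  by (simp add: definable_measurable_def)

lemma stone_conjd:
  assumes N: "prob_space N" and dm: "definable_measurable (\<lambda>_. True) N E r"
  shows "stone_mod N E r (conjd \<phi> \<psi>) = stone_mod N E r \<phi> * stone_mod N E r \<psi>"
  unfolding conjd_def
  by (subst stone_mod_conj[OF N conjd_disj dm_sets[OF dm] dm_sets[OF dm] dm_sets[OF dm]])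
     (simp add: stone_mod_rn[OF N inj_shift dm_sets[OF dm]])

lemma stone_neg:
  assumes N: "prob_space N" and dm: "definable_measurable (\<lambda>_. True) N E r"
  shows "stone_mod N E r (Neg \<phi>) = 1 - stone_mod N E r \<phi>"
  by (rule stone_mod_neg[OF N dm_sets[OF dm]])

fun pw :: "fm \<Rightarrow> nat \<Rightarrow> fm" where
  "pw \<phi> 0 = Tr"
| "pw \<phi> (Suc n) = conjd \<phi> (pw \<phi> n)"

lemma stone_pw:
  assumes N: "prob_space N" and dm: "definable_measurable (\<lambda>_. True) N E r"
  shows "stone_mod N E r (pw \<phi> n) = stone_mod N E r \<phi> ^ n"
  by (induction n) (simp_all add: stone_mod_Tr stone_conjd[OF N dm])

fun mon :: "(fm \<times> nat \<times> nat) list \<Rightarrow> fm" where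
  "mon [] = Tr"
| "mon ((\<phi>, a, b) # xs) = conjd (pw \<phi> a) (conjd (pw (Neg \<phi>) b) (mon xs))"

lemma stone_mon:
  assumes N: "prob_space N" and dm: "definable_measurable (\<lambda>_. True) N E r"
  shows "stone_mod N E r (mon xs) =
    prod_list (map (\<lambda>(\<phi>, a, b). stone_mod N E r \<phi> ^ a * (1 - stone_mod N E r \<phi>) ^ b) xs)"
  by (induction xs rule: mon.induct)
     (simp_all add: stone_mod_Tr stone_conjd[OF N dm] stone_pw[OF N dm] stone_neg[OF N dm])

definition sw :: "nat \<Rightarrow> nat \<Rightarrow> nat \<Rightarrow> nat" where
  "sw x y = (\<lambda>u. if u = x then y else if u = y then x else u)"

lemma inj_sw: "inj (sw x y)"
  by (auto simp: inj_on_def sw_def split: if_splits)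

definition xi_at :: "fm \<Rightarrow> nat \<Rightarrow> nat \<Rightarrow> fm" where
  "xi_at \<xi> x y = rn (sw x y) \<xi>"

lemma sat_xi_at:
  assumes "fv \<xi> = {x}" "graph_fm \<xi>"
  shows "sat V E r a (xi_at \<xi> x y) = sat V E undefined (\<lambda>_. a y) \<xi>"
proof -
  have "sat V E r a (xi_at \<xi> x y) = sat V E r (a \<circ> sw x y) \<xi>"
    by (simp add: xi_at_def sat_rn[OF inj_sw])
  also have "\<dots> = sat V E r (\<lambda>_. a y) \<xi>"
    by (rule sat_fv) (use assms in \<open>simp add: sw_def\<close>)
  also have "\<dots> = sat V E undefined (\<lambda>_. a y) \<xi>"
    by (rule sat_graph_root[OF assms(2)])
  finally show ?thesis .
qed

lemma fv_xi_at: "fv \<xi> = {x} \<Longrightarrow> fv (xi_at \<xi> x y) = {y}"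
  by (simp add: xi_at_def fv_rn[OF inj_sw]) (simp add: sw_def)

lemma graph_xi_at: "graph_fm (xi_at \<xi> x y) = graph_fm \<xi>"
  by (simp add: xi_at_def graph_rn)

definition star :: "fm \<Rightarrow> nat \<Rightarrow> fm \<Rightarrow> fm" where
  "star \<xi> x \<Psi> = Ex (vb \<Psi>) (Conj (xi_at \<xi> x (vb \<Psi>)) (sr (vb \<Psi>) \<Psi>))"

lemma sat_star:
  assumes "fv \<xi> = {x}" "graph_fm \<xi>"
  shows "sat V E r a (star \<xi> x \<Psi>) = (\<exists>v\<in>V. sat V E undefined (\<lambda>_. v) \<xi> \<and> sat V E v a \<Psi>)"
proof -
  have "sat V E v (a(vb \<Psi> := v)) \<Psi> = sat V E v a \<Psi>" for v
    by (rule sat_fv) (use vb_notin in auto)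
  then show ?thesis
    by (simp add: star_def sat_xi_at[OF assms] sat_sr vb_notin)
qed

lemma fv_star:
  assumes "fv \<xi> = {x}"
  shows "fv (star \<xi> x \<Psi>) = fv \<Psi>"
  using fv_sr1[of \<Psi> "vb \<Psi>"] fv_sr2[of "vb \<Psi>" \<Psi>] vb_notin[of \<Psi>]
  by (auto simp: star_def fv_xi_at[OF assms])

lemma graph_star: "graph_fm \<xi> \<Longrightarrow> graph_fm (star \<xi> x \<Psi>)"
  by (simp add: star_def graph_xi_at graph_sr)

lemma defset_star:
  assumes "fv \<xi> = {x}" "graph_fm \<xi>"
  shows "defset V E r (star \<xi> x \<Psi>) = (\<Union>v\<in>{v\<in>V. sat V E undefined (\<lambda>_. v) \<xi>}. defset V E v \<Psi>)"
  by (auto simp: defset_def sat_star[OF assms] fv_star[OF assms(1)])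

fun exs :: "nat \<Rightarrow> fm \<Rightarrow> fm" where
  "exs 0 \<phi> = \<phi>"
| "exs (Suc j) \<phi> = exs j (Ex j \<phi>)"

lemma sat_exs:
  "sat V E r a (exs j \<phi>) = (\<exists>w. (\<forall>i<j. w i \<in> V) \<and> sat V E r (\<lambda>u. if u < j then w u else a u) \<phi>)"
proof (induction j arbitrary: \<phi>)
  case 0 then show ?case by simp
next
  case (Suc j)
  have upd: "(\<lambda>u. if u < j then w u else a u)(j := v) = (\<lambda>u. if u < Suc j then (w(j:=v)) u else a u)" for w v
    by (auto simp: fun_eq_iff)
  have "sat V E r a (exs (Suc j) \<phi>) =
     (\<exists>w. (\<forall>i<j. w i \<in> V) \<and> (\<exists>v\<in>V. sat V E r ((\<lambda>u. if u < j then w u else a u)(j := v)) \<phi>))"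
    by (simp add: Suc.IH)
  also have "\<dots> = (\<exists>w. (\<forall>i<Suc j. w i \<in> V) \<and> sat V E r (\<lambda>u. if u < Suc j then w u else a u) \<phi>)"
  proof
    assume "\<exists>w. (\<forall>i<j. w i \<in> V) \<and> (\<exists>v\<in>V. sat V E r ((\<lambda>u. if u < j then w u else a u)(j := v)) \<phi>)"
    then obtain w v where "\<forall>i<j. w i \<in> V" "v \<in> V" "sat V E r ((\<lambda>u. if u < j then w u else a u)(j := v)) \<phi>"
      by blast
    then show "\<exists>w. (\<forall>i<Suc j. w i \<in> V) \<and> sat V E r (\<lambda>u. if u < Suc j then w u else a u) \<phi>"
      by (intro exI[of _ "w(j:=v)"]) (auto simp: upd less_Suc_eq)
  next
    assume "\<exists>w. (\<forall>i<Suc j. w i \<in> V) \<and> sat V E r (\<lambda>u. if u < Suc j then w u else a u) \<phi>"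
    then obtain w where w: "\<forall>i<Suc j. w i \<in> V" "sat V E r (\<lambda>u. if u < Suc j then w u else a u) \<phi>"
      by blast
    have "w(j := w j) = w" by simp
    then have s: "sat V E r ((\<lambda>u. if u < j then w u else a u)(j := w j)) \<phi>"
      using w(2) by (simp only: upd)
    have wj: "w j \<in> V" using w(1) by simp
    have wi: "\<forall>i<j. w i \<in> V" using w(1) by simp
    show "\<exists>w. (\<forall>i<j. w i \<in> V) \<and> (\<exists>v\<in>V. sat V E r ((\<lambda>u. if u < j then w u else a u)(j := v)) \<phi>)"
      using s wj wi by blast
  qed
  finally show ?case .
qed

lemma fv_exs: "fv (exs j \<phi>) = fv \<phi> - {..<j}"
  by (induction j arbitrary: \<phi>) (auto simp: lessThan_Suc)

lemma graph_exs: "graph_fm (exs j \<phi>) = graph_fm \<phi>"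
  by (induction j arbitrary: \<phi>) auto

fun neqs :: "nat \<Rightarrow> nat \<Rightarrow> fm" where
  "neqs j 0 = Eq (Var 0) (Var 0)"
| "neqs j (Suc i) = Conj (neqs j i) (Neg (Eq (Var i) (Var j)))"

lemma sat_neqs: "sat V E r a (neqs j i) = (\<forall>i'<i. a i' \<noteq> a j)"
  by (induction i) (auto simp: less_Suc_eq)

lemma fv_neqs: "fv (neqs j i) \<subseteq> insert 0 (insert j {..<i})"
  by (induction i) auto

lemma graph_neqs: "graph_fm (neqs j i)"
  by (induction i) auto

fun body :: "fm \<Rightarrow> nat \<Rightarrow> nat \<Rightarrow> fm" where
  "body \<xi> x 0 = Eq (Var 0) (Var 0)"
| "body \<xi> x (Suc j) = Conj (body \<xi> x j) (Conj (xi_at \<xi> x j) (neqs j j))"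

lemma sat_body:
  assumes "fv \<xi> = {x}" "graph_fm \<xi>"
  shows "sat V E r a (body \<xi> x j) =
    ((\<forall>i<j. sat V E undefined (\<lambda>_. a i) \<xi>) \<and> (\<forall>i<j. \<forall>i'<i. a i' \<noteq> a i))"
  by (induction j) (auto simp: sat_xi_at[OF assms] sat_neqs less_Suc_eq)

lemma fv_body:
  assumes "fv \<xi> = {x}"
  shows "fv (body \<xi> x (Suc j)) \<subseteq> {..<Suc j}"
proof (induction j)
  case 0 then show ?case using fv_neqs[of 0 0] by (auto simp: fv_xi_at[OF assms])
next
  case (Suc j) then show ?case using fv_neqs[of "Suc j" "Suc j"] by (auto simp: fv_xi_at[OF assms])
qed

lemma graph_body: "graph_fm \<xi> \<Longrightarrow> graph_fm (body \<xi> x j)"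
  apply (induction j)
   apply simp
  apply (simp only: body.simps graph_fm.simps)
  apply (subst graph_xi_at)
  apply (simp add: graph_neqs)
  done

definition AM :: "fm \<Rightarrow> nat \<Rightarrow> nat \<Rightarrow> fm" where
  "AM \<xi> x k = Neg (exs (Suc k) (body \<xi> x (Suc k)))"

lemma fv_AM: "fv \<xi> = {x} \<Longrightarrow> fv (AM \<xi> x k) = {}"
  using fv_body[of \<xi> x k] by (auto simp: AM_def fv_exs)

lemma graph_AM: "graph_fm \<xi> \<Longrightarrow> graph_fm (AM \<xi> x k)"
  using graph_body[of \<xi> x "Suc k"] by (simp add: AM_def graph_exs del: body.simps)

lemma inj_lemma: "(\<forall>i<j. \<forall>i'<i. w i' \<noteq> w i) = inj_on w {..<j::nat}"
proof
  assume h: "\<forall>i<j. \<forall>i'<i. w i' \<noteq> w i"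
  show "inj_on w {..<j}"
  proof (rule inj_onI)
    fix a b assume ab: "a \<in> {..<j}" "b \<in> {..<j}" "w a = w b"
    show "a = b"
    proof (rule ccontr)
      assume "a \<noteq> b"
      then have "a < b \<or> b < a" by arith
      then show False
      proof
        assume "a < b" then show False using h ab by (metis lessThan_iff)
      next
        assume "b < a" then show False using h ab by (metis lessThan_iff)
      qed
    qed
  qed
next
  assume "inj_on w {..<j}"
  then show "\<forall>i<j. \<forall>i'<i. w i' \<noteq> w i"
    by (auto simp: inj_on_def)
qed

lemma card_ge_iff:
  assumes "finite X"
  shows "(\<exists>w. w ` {..<j} \<subseteq> X \<and> inj_on w {..<j}) = (j \<le> card X)"
proof
  assume "\<exists>w. w ` {..<j} \<subseteq> X \<and> inj_on w {..<j}"
  then obtain w where "w ` {..<j} \<subseteq> X" "inj_on w {..<j}" by blast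
  then show "j \<le> card X" using card_inj_on_le[of w "{..<j}" X] assms by auto
next
  assume "j \<le> card X"
  then obtain S where S: "S \<subseteq> X" "card S = j" by (meson obtain_subset_with_card_n)
  then have "finite S" using assms finite_subset by blast
  then obtain h where "bij_betw h {0..<card S} S" using ex_bij_betw_nat_finite by blast
  then show "\<exists>w. w ` {..<j} \<subseteq> X \<and> inj_on w {..<j}"
    using S by (intro exI[of _ h]) (auto simp: bij_betw_def atLeast0LessThan)
qed

lemma sat_AM:
  assumes "fv \<xi> = {x}" "graph_fm \<xi>" and fin: "finite {v\<in>V. sat V E undefined (\<lambda>_. v) \<xi>}"
  shows "sat V E r a (AM \<xi> x k) = (card {v\<in>V. sat V E undefined (\<lambda>_. v) \<xi>} \<le> k)"
proof -
  let ?X = "{v\<in>V. sat V E undefined (\<lambda>_. v) \<xi>}"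
  have "sat V E r a (AM \<xi> x k) = (\<not> (\<exists>w. (\<forall>i<Suc k. w i \<in> V) \<and>
      (\<forall>i<Suc k. sat V E undefined (\<lambda>_. w i) \<xi>) \<and> (\<forall>i<Suc k. \<forall>i'<i. w i' \<noteq> w i)))"
  proof -
    have bb: "\<And>w. sat V E r (\<lambda>u. if u < Suc k then w u else a u) (body \<xi> x (Suc k)) =
      ((\<forall>i<Suc k. sat V E undefined (\<lambda>_. w i) \<xi>) \<and> (\<forall>i<Suc k. \<forall>i'<i. w i' \<noteq> w i))"
      unfolding sat_body[OF assms(1,2)] by auto
    show ?thesis by (simp only: AM_def sat.simps sat_exs bb)
  qed
  also have "\<dots> = (\<not> (\<exists>w. w ` {..<Suc k} \<subseteq> ?X \<and> inj_on w {..<Suc k}))"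
    by (simp add: inj_lemma[symmetric] image_subset_iff) blast
  also have "\<dots> = (\<not> Suc k \<le> card ?X)"
    using card_ge_iff[OF fin, of "Suc k"] by simp
  also have "\<dots> = (card ?X \<le> k)" by arith
  finally show ?thesis .
qed

lemma amgm_homog:
  fixes u v :: real
  assumes u: "u \<ge> 0" and v: "v \<ge> 0" and D: "a + b = D" "D > 0"
  shows "u ^ a * v ^ b \<le> (a / D) ^ a * (b / D) ^ b * (u + v) ^ D"
proof (cases "a = 0 \<or> b = 0")
  case True
  then show ?thesis
  proof
    assume a0: "a = 0"
    then have "b = D" using D by simp
    then show ?thesis using a0 D u v by (simp add: power_mono)
  next
    assume b0: "b = 0"
    then have "a = D" using D by simp
    then show ?thesis using b0 D u v by (simp add: power_mono)
  qed
next
  case False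
  then have ab: "a > 0" "b > 0" by auto
  define \<alpha> where "\<alpha> = real a / D"
  define \<beta> where "\<beta> = real b / D"
  have al: "\<alpha> > 0" "\<beta> > 0" "\<alpha> + \<beta> = 1"
    using ab D by (auto simp: \<alpha>_def \<beta>_def field_simps)
  show ?thesis
  proof (cases "u = 0 \<or> v = 0")
    case True
    then have z: "u ^ a * v ^ b = 0" using ab by auto
    have "0 \<le> (a / D) ^ a * (b / D) ^ b * (u + v) ^ D" using u v by simp
    then show ?thesis using z by linarith
  next
    case False
    then have uv: "u > 0" "v > 0" using u v by auto
    have y: "(u / \<alpha>) powr \<alpha> * (v / \<beta>) powr \<beta> \<le> \<alpha> * (u / \<alpha>) + \<beta> * (v / \<beta>)"
      by (rule Youngs_inequality_0) (use al uv in auto)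
    then have y2: "(u / \<alpha>) powr \<alpha> * (v / \<beta>) powr \<beta> \<le> u + v" using al by simp
    have pos: "0 \<le> (u / \<alpha>) powr \<alpha> * (v / \<beta>) powr \<beta>" by simp
    have "((u / \<alpha>) powr \<alpha> * (v / \<beta>) powr \<beta>) ^ D \<le> (u + v) ^ D"
      by (rule power_mono[OF y2 pos])
    moreover have "((u / \<alpha>) powr \<alpha> * (v / \<beta>) powr \<beta>) ^ D = (u / \<alpha>) ^ a * (v / \<beta>) ^ b"
    proof -
      have "((u / \<alpha>) powr \<alpha>) ^ D = (u / \<alpha>) powr (\<alpha> * D)"
        using al uv by (simp add: powr_realpow[symmetric] powr_powr)
      also have "\<dots> = (u / \<alpha>) ^ a"
      proof -
        have ua: "u / \<alpha> > 0" using al uv by simp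
        have "\<alpha> * D = real a" using D by (simp add: \<alpha>_def)
        then show ?thesis by (simp only: powr_realpow[OF ua])
      qed
      finally have 1: "((u / \<alpha>) powr \<alpha>) ^ D = (u / \<alpha>) ^ a" .
      have "((v / \<beta>) powr \<beta>) ^ D = (v / \<beta>) powr (\<beta> * D)"
        using al uv by (simp add: powr_realpow[symmetric] powr_powr)
      also have "\<dots> = (v / \<beta>) ^ b"
      proof -
        have ua: "v / \<beta> > 0" using al uv by simp
        have "\<beta> * D = real b" using D by (simp add: \<beta>_def)
        then show ?thesis by (simp only: powr_realpow[OF ua])
      qed
      finally have 2: "((v / \<beta>) powr \<beta>) ^ D = (v / \<beta>) ^ b" .
      show ?thesis by (simp add: power_mult_distrib 1 2)
    qed
    ultimately have "(u / \<alpha>) ^ a * (v / \<beta>) ^ b \<le> (u + v) ^ D" by simp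
    then have "u ^ a * v ^ b / (\<alpha> ^ a * \<beta> ^ b) \<le> (u + v) ^ D"
      by (simp add: power_divide)
    then show ?thesis using al by (simp add: \<alpha>_def \<beta>_def divide_le_eq mult.commute mult.left_commute)
  qed
qed

lemma hell_bound:
  fixes q z :: real
  assumes q: "0 \<le> q" "q \<le> 1" and z: "0 \<le> z" "z \<le> 1"
  shows "sqrt (q * z) + sqrt ((1 - q) * (1 - z)) \<le> 1 - (q - z)\<^sup>2 / 8"
proof -
  define A where "A = sqrt q"
  define B where "B = sqrt z"
  define C where "C = sqrt (1 - q)"
  define Dd where "Dd = sqrt (1 - z)"
  have A2: "A\<^sup>2 = q" using q by (simp add: A_def)
  have B2: "B\<^sup>2 = z" using z by (simp add: B_def)
  have C2: "C\<^sup>2 = 1 - q" using q by (simp add: C_def)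
  have D2: "Dd\<^sup>2 = 1 - z" using z by (simp add: Dd_def)
  have A0: "0 \<le> A" "A \<le> 1" using q by (auto simp: A_def)
  have B0: "0 \<le> B" "B \<le> 1" using z by (auto simp: B_def)
  have s: "sqrt (q * z) + sqrt ((1 - q) * (1 - z)) = A * B + C * Dd"
    by (simp add: A_def B_def C_def Dd_def real_sqrt_mult)
  have e1: "2 - 2 * (A * B + C * Dd) = (A - B)\<^sup>2 + (C - Dd)\<^sup>2"
    using A2 B2 C2 D2 by (simp add: power2_eq_square algebra_simps)
  have e2: "(q - z)\<^sup>2 = (A - B)\<^sup>2 * (A + B)\<^sup>2"
    using A2 B2 by (simp add: power2_eq_square algebra_simps)
  have e3: "(A + B)\<^sup>2 \<le> 4"
  proof -
    have "A + B \<le> 2" "0 \<le> A + B" using A0 B0 by auto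
    then have "(A + B)\<^sup>2 \<le> 2\<^sup>2" by (rule power_mono)
    then show ?thesis by simp
  qed
  have "(q - z)\<^sup>2 \<le> (A - B)\<^sup>2 * 4"
    unfolding e2 by (rule mult_left_mono[OF e3]) simp
  moreover have "0 \<le> (C - Dd)\<^sup>2" by simp
  moreover have "\<And>X Y W S::real. X \<le> Y * 4 \<Longrightarrow> 0 \<le> W \<Longrightarrow> 2 - 2 * S = Y + W \<Longrightarrow> S \<le> 1 - X / 8"
    by linarith
  ultimately show ?thesis unfolding s using e1 by blast
qed

definition fab :: "nat \<Rightarrow> nat \<Rightarrow> real \<Rightarrow> real" where
  "fab a b z = z ^ a * (1 - z) ^ b"

lemma fab_q_pos:
  fixes D :: nat
  assumes D: "a + b = D" "D > 0"
  shows "fab a b (a / D) > 0"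
proof -
  have "(real a / D) ^ a > 0" using D by (cases "a = 0") auto
  moreover have "(1 - real a / D) ^ b > 0"
  proof (cases "b = 0")
    case False
    then have "real a < D" using D by simp
    then show ?thesis using D by (simp add: field_simps)
  qed simp
  ultimately show ?thesis by (simp add: fab_def)
qed

lemma fab_z:
  fixes D :: nat
  assumes D: "a + b = D" "D > 0" and z: "0 \<le> z" "z \<le> 1"
  shows "fab a b z \<le> fab a b (a / D) * (1 - (a / D - z)\<^sup>2 / 8) ^ (2 * D)"
proof -
  define q where "q = real a / D"
  have q: "0 \<le> q" "q \<le> 1" using D by (auto simp: q_def)
  have bq: "real b / D = 1 - q" using D by (simp add: q_def field_simps)
  define u where "u = sqrt (z * q)"
  define v where "v = sqrt ((1 - z) * (1 - q))"
  have uv: "u \<ge> 0" "v \<ge> 0" using q z by (auto simp: u_def v_def)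
  have H0: "u ^ a * v ^ b \<le> (a / D) ^ a * (b / D) ^ b * (u + v) ^ D"
    by (rule amgm_homog[OF uv D])
  have H: "u ^ a * v ^ b \<le> q ^ a * (1 - q) ^ b * (u + v) ^ D"
    using H0 unfolding bq q_def[symmetric] .
  have l0: "0 \<le> u ^ a * v ^ b" using uv by simp
  have "(u ^ a * v ^ b)\<^sup>2 \<le> (q ^ a * (1 - q) ^ b * (u + v) ^ D)\<^sup>2"
    by (rule power_mono[OF H l0])
  moreover have "(u ^ a * v ^ b)\<^sup>2 = fab a b z * fab a b q"
  proof -
    have "u\<^sup>2 = z * q" "v\<^sup>2 = (1 - z) * (1 - q)" using q z by (auto simp: u_def v_def)
    then show ?thesis
      by (simp add: fab_def power_mult_distrib power_mult[symmetric] mult.commute[of _ 2] power_mult)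
  qed
  moreover have "(q ^ a * (1 - q) ^ b * (u + v) ^ D)\<^sup>2 = fab a b q * (fab a b q * (u + v) ^ (2 * D))"
    by (simp add: fab_def power_mult_distrib power_mult algebra_simps power2_eq_square)
  ultimately have "fab a b z * fab a b q \<le> fab a b q * (fab a b q * (u + v) ^ (2 * D))" by simp
  moreover have fq: "fab a b q > 0" using fab_q_pos[OF D] by (simp add: q_def)
  ultimately have 1: "fab a b z \<le> fab a b q * (u + v) ^ (2 * D)"
    by (simp add: mult.commute)
  have "u + v \<le> 1 - (q - z)\<^sup>2 / 8"
    using hell_bound[OF q z] by (simp add: u_def v_def mult.commute)
  then have "(u + v) ^ (2 * D) \<le> (1 - (q - z)\<^sup>2 / 8) ^ (2 * D)"
    using uv by (intro power_mono) auto
  then have "fab a b q * (u + v) ^ (2 * D) \<le> fab a b q * (1 - (q - z)\<^sup>2 / 8) ^ (2 * D)"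
    using fq by simp
  with 1 show ?thesis by (simp add: q_def)
qed

lemma fab_p:
  fixes D :: nat
  assumes D: "a + b = D" "D > 0" and p: "0 < p" "p < 1"
  shows "fab a b (a / D) \<le> fab a b p * (1 + (a / D - p)\<^sup>2 / (p * (1 - p))) ^ D"
proof -
  define q where "q = real a / D"
  have q: "0 \<le> q" "q \<le> 1" using D by (auto simp: q_def)
  have bq: "real b / D = 1 - q" using D by (simp add: q_def field_simps)
  define u where "u = q\<^sup>2 / p"
  define v where "v = (1 - q)\<^sup>2 / (1 - p)"
  have uv: "u \<ge> 0" "v \<ge> 0" using q p by (auto simp: u_def v_def)
  have H0: "u ^ a * v ^ b \<le> (a / D) ^ a * (b / D) ^ b * (u + v) ^ D"
    by (rule amgm_homog[OF uv D])
  have H: "u ^ a * v ^ b \<le> q ^ a * (1 - q) ^ b * (u + v) ^ D"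
    using H0 unfolding bq q_def[symmetric] .
  have fp: "fab a b p > 0" using p by (simp add: fab_def)
  have fq: "fab a b q > 0" using fab_q_pos[OF D] by (simp add: q_def)
  have "u ^ a * v ^ b = fab a b q * fab a b q / fab a b p"
    by (simp add: u_def v_def fab_def power_divide power_mult_distrib power2_eq_square
        power_mult[symmetric] mult.commute[of 2] power_mult)
  then have "fab a b q * fab a b q / fab a b p \<le> fab a b q * (u + v) ^ D"
    using H by (simp add: fab_def)
  then have "fab a b q * fab a b q \<le> fab a b q * ((u + v) ^ D * fab a b p)"
    using fp by (simp add: divide_le_eq algebra_simps)
  then have "fab a b q \<le> (u + v) ^ D * fab a b p"
    using fq by simp
  moreover have "u + v = 1 + (q - p)\<^sup>2 / (p * (1 - p))"
    using p by (simp add: u_def v_def field_simps power2_eq_square)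
  ultimately show ?thesis by (simp add: q_def mult.commute)
qed

definition ch :: "real \<Rightarrow> nat \<Rightarrow> nat \<times> nat" where
  "ch p D = (if p = 0 then (0, D) else if p = 1 then (D, 0)
             else (nat \<lfloor>p * D\<rfloor>, D - nat \<lfloor>p * D\<rfloor>))"

lemma ch_sum: "0 \<le> p \<Longrightarrow> p \<le> 1 \<Longrightarrow> fst (ch p D) + snd (ch p D) = D"
proof -
  assume p: "0 \<le> p" "p \<le> 1"
  have "nat \<lfloor>p * D\<rfloor> \<le> D"
  proof -
    have "p * D \<le> D" using p by (simp add: mult_left_le_one_le)
    then have "\<lfloor>p * D\<rfloor> \<le> int D" by linarith
    then show ?thesis by simp
  qed
  then show ?thesis by (simp add: ch_def)
qed

lemma ch_close:
  assumes p: "0 \<le> p" "p \<le> 1" and D: "D > 0"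
  shows "\<bar>real (fst (ch p D)) / D - p\<bar> \<le> 1 / D"
proof (cases "p = 0 \<or> p = 1")
  case True then show ?thesis using D by (auto simp: ch_def)
next
  case False
  then have a: "fst (ch p D) = nat \<lfloor>p * D\<rfloor>" by (simp add: ch_def)
  have "0 \<le> \<lfloor>p * D\<rfloor>" using p by simp
  then have "real (nat \<lfloor>p * D\<rfloor>) = real_of_int \<lfloor>p * D\<rfloor>" by simp
  moreover have "real_of_int \<lfloor>p * D\<rfloor> \<le> p * D" "p * D < real_of_int \<lfloor>p * D\<rfloor> + 1" by linarith+
  ultimately have "\<bar>real (nat \<lfloor>p * D\<rfloor>) - p * D\<bar> \<le> 1" by linarith
  then have "\<bar>real (nat \<lfloor>p * D\<rfloor>) / D - p\<bar> * D \<le> 1"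
    using D by (simp add: abs_mult[symmetric] field_simps del: of_int_floor_le)
  then show ?thesis unfolding a using D by (simp add: field_simps)
qed

lemma coord:
  fixes D :: nat
  assumes p: "0 \<le> p" "p \<le> 1" and D: "D > 0"
    and Dp: "0 < p \<Longrightarrow> p < 1 \<Longrightarrow> real D * (p * (1 - p)) \<ge> 1"
  defines "a \<equiv> fst (ch p D)" and "b \<equiv> snd (ch p D)"
  shows "fab a b p > 0"
    and "\<And>z. 0 \<le> z \<Longrightarrow> z \<le> 1 \<Longrightarrow>
           fab a b z \<le> exp 1 * fab a b p * (1 - (a / D - z)\<^sup>2 / 8) ^ (2 * D)"
proof -
  have ab: "a + b = D" using ch_sum[OF p] by (simp add: a_def b_def)
  have fq: "fab a b (a / D) \<le> exp 1 * fab a b p \<and> fab a b p > 0"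
  proof (cases "p = 0 \<or> p = 1")
    case True
    then have "real a / D = p" using D by (auto simp: a_def ch_def)
    moreover have "fab a b p > 0" using True D by (auto simp: a_def b_def ch_def fab_def)
    ultimately show ?thesis by (simp add: mult_le_cancel_right1)
  next
    case False
    then have p': "0 < p" "p < 1" using p by auto
    have fp: "fab a b p > 0" using p' by (simp add: fab_def)
    have 1: "fab a b (a / D) \<le> fab a b p * (1 + (a / D - p)\<^sup>2 / (p * (1 - p))) ^ D"
      by (rule fab_p[OF ab D p'])
    define x where "x = (a / D - p)\<^sup>2 / (p * (1 - p))"
    have x0: "0 \<le> x" using p' by (simp add: x_def)
    have "(a / D - p)\<^sup>2 \<le> (1 / D)\<^sup>2"
      using ch_close[OF p D] abs_le_square_iff[of "a / D - p" "1 / D"] by (simp add: a_def)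
    then have "x \<le> (1 / D)\<^sup>2 / (p * (1 - p))" using p' unfolding x_def
      by (intro divide_right_mono) auto
    then have "D * x \<le> D * ((1 / D)\<^sup>2 / (p * (1 - p)))" by (rule mult_left_mono) simp
    also have "\<dots> = 1 / (D * (p * (1 - p)))"
    proof -
      have "p * (1 - p) \<noteq> 0" "real D \<noteq> 0" using p' D by auto
      then show ?thesis by (simp add: power2_eq_square divide_simps)
    qed
    also have "\<dots> \<le> 1" using Dp[OF p'] by simp
    finally have Dx: "D * x \<le> 1" .
    have "(1 + x) ^ D \<le> exp x ^ D"
      by (rule power_mono) (use x0 exp_ge_add_one_self in auto)
    also have "\<dots> = exp (D * x)" by (simp add: exp_of_nat_mult)
    also have "\<dots> \<le> exp 1" using Dx by simp
    finally have ex: "(1 + x) ^ D \<le> exp 1" .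
    have "fab a b p * (1 + x) ^ D \<le> fab a b p * exp 1"
      by (rule mult_left_mono[OF ex]) (use fp in simp)
    then have "fab a b (a / D) \<le> fab a b p * exp 1" using 1 unfolding x_def by linarith
    then show ?thesis using fp by (simp add: mult.commute)
  qed
  then show "fab a b p > 0" by simp
  fix z :: real assume z: "0 \<le> z" "z \<le> 1"
  have 2: "fab a b z \<le> fab a b (a / D) * (1 - (a / D - z)\<^sup>2 / 8) ^ (2 * D)"
    by (rule fab_z[OF ab D z])
  have sq: "(a / D - z)\<^sup>2 \<le> 1"
  proof -
    have "a \<le> D" using ab by simp
    then have "real a / D \<le> 1" using D by simp
    moreover have "0 \<le> real a / D" by simp
    ultimately have "\<bar>a / D - z\<bar> \<le> 1" using z unfolding abs_le_iff by linarith
    then show ?thesis using abs_le_square_iff[of "a / D - z" 1] by simp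
  qed
  have s0: "0 \<le> (1 - (a / D - z)\<^sup>2 / 8) ^ (2 * D)" using sq by simp
  show "fab a b z \<le> exp 1 * fab a b p * (1 - (a / D - z)\<^sup>2 / 8) ^ (2 * D)"
    using 2 mult_right_mono[OF conjunct1[OF fq] s0] by simp
qed

lemma prod_list_nonneg_map: "(\<forall>x\<in>set xs. 0 \<le> (f x :: real)) \<Longrightarrow> 0 \<le> prod_list (map f xs)"
  by (induction xs) auto

lemma prod_list_pos_map: "(\<forall>x\<in>set xs. 0 < (f x :: real)) \<Longrightarrow> 0 < prod_list (map f xs)"
  by (induction xs) auto

lemma prod_bound:
  fixes F P :: "'c \<Rightarrow> real"
  assumes c: "c \<ge> 0" and w: "0 \<le> w" "w \<le> 1"
    and FP: "\<forall>\<phi>\<in>set Fs. 0 \<le> F \<phi> \<and> F \<phi> \<le> c * P \<phi> \<and> 0 \<le> P \<phi>"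
    and far: "\<forall>\<phi>\<in>set Fs. far \<phi> \<longrightarrow> F \<phi> \<le> c * P \<phi> * w"
  shows "prod_list (map F Fs) \<le> c ^ length Fs * prod_list (map P Fs) * (if \<exists>\<phi>\<in>set Fs. far \<phi> then w else 1)"
  using FP far
proof (induction Fs)
  case Nil then show ?case by simp
next
  case (Cons \<phi> Fs)
  define R where "R = c ^ length Fs * prod_list (map P Fs) * (if \<exists>\<phi>\<in>set Fs. far \<phi> then w else 1)"
  have IH: "prod_list (map F Fs) \<le> R" using Cons by (simp add: R_def)
  have F0: "0 \<le> prod_list (map F Fs)" using Cons.prems by (intro prod_list_nonneg_map) auto
  have P0: "0 \<le> prod_list (map P Fs)" using Cons.prems by (intro prod_list_nonneg_map) auto
  have R0: "0 \<le> R" using P0 c w by (simp add: R_def)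
  have R1: "R \<le> c ^ length Fs * prod_list (map P Fs)"
  proof -
    have "0 \<le> c ^ length Fs * prod_list (map P Fs)" using c P0 by simp
    then show ?thesis using w unfolding R_def by (simp add: mult_left_le)
  qed
  have h: "0 \<le> F \<phi>" "F \<phi> \<le> c * P \<phi>" "0 \<le> P \<phi>" using Cons.prems by auto
  show ?case
  proof (cases "far \<phi>")
    case True
    have hf: "F \<phi> \<le> c * P \<phi> * w" using Cons.prems True by auto
    have "F \<phi> * prod_list (map F Fs) \<le> (c * P \<phi> * w) * (c ^ length Fs * prod_list (map P Fs))"
      by (rule mult_mono[OF hf order_trans[OF IH R1]]) (use c w h F0 in auto)
    then show ?thesis using True by (simp add: algebra_simps)
  next
    case False
    have "F \<phi> * prod_list (map F Fs) \<le> (c * P \<phi>) * R"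
      by (rule mult_mono[OF h(2) IH]) (use c h F0 in auto)
    then show ?thesis using False by (simp add: R_def algebra_simps)
  qed
qed

lemma multi:
  fixes Fs :: "'c list" and p :: "'c \<Rightarrow> real"
  assumes p: "\<forall>\<phi>\<in>set Fs. 0 \<le> p \<phi> \<and> p \<phi> \<le> 1" and \<epsilon>: "\<epsilon> > 0" and K: "K \<ge> 0"
  shows "\<exists>xs. map fst xs = Fs \<and>
    prod_list (map (\<lambda>(\<phi>, a, b). p \<phi> ^ a * (1 - p \<phi>) ^ b) xs) > 0 \<and>
    (\<forall>t. (\<forall>\<phi>\<in>set Fs. 0 \<le> t \<phi> \<and> t \<phi> \<le> 1) \<longrightarrow> (\<exists>\<phi>\<in>set Fs. \<bar>t \<phi> - p \<phi>\<bar> \<ge> \<epsilon>) \<longrightarrow>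
       K * prod_list (map (\<lambda>(\<phi>, a, b). t \<phi> ^ a * (1 - t \<phi>) ^ b) xs)
         \<le> prod_list (map (\<lambda>(\<phi>, a, b). p \<phi> ^ a * (1 - p \<phi>) ^ b) xs) / 2)"
proof -
  define e where "e = min \<epsilon> 1"
  have e: "0 < e" "e \<le> 1" "e \<le> \<epsilon>" using \<epsilon> by (auto simp: e_def)
  define \<theta> where "\<theta> = 1 - e\<^sup>2 / 32"
  have e2: "e\<^sup>2 \<le> 1" using e by (simp add: power_le_one)
  have th: "0 \<le> \<theta>" "\<theta> < 1" using e e2 by (auto simp: \<theta>_def)
  define m where "m = length Fs"
  define C where "C = K * exp 1 ^ m"
  have C0: "C \<ge> 0" using K by (simp add: C_def)
  have ev1: "eventually (\<lambda>D. (\<theta>\<^sup>2) ^ D < 1 / (2 * (C + 1))) sequentially"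
  proof -
    have "(\<lambda>D. (\<theta>\<^sup>2) ^ D) \<longlonglongrightarrow> 0"
      by (rule LIMSEQ_power_zero) (use th in \<open>simp add: abs_square_less_1\<close>)
    moreover have "0 < 1 / (2 * (C + 1))" using C0 by simp
    ultimately show ?thesis by (rule order_tendstoD(2))
  qed
  have ev2: "eventually (\<lambda>D::nat. real D \<ge> c) sequentially" for c :: real
    using eventually_ge_at_top[of "nat \<lceil>c\<rceil>"] by eventually_elim linarith
  have ev3: "eventually (\<lambda>D::nat. \<forall>\<phi>\<in>set Fs. 0 < p \<phi> \<longrightarrow> p \<phi> < 1 \<longrightarrow> real D * (p \<phi> * (1 - p \<phi>)) \<ge> 1) sequentially"
  proof (rule eventually_ball_finite)
    show "finite (set Fs)" by simp
    show "\<forall>\<phi>\<in>set Fs. eventually (\<lambda>D::nat. 0 < p \<phi> \<longrightarrow> p \<phi> < 1 \<longrightarrow> real D * (p \<phi> * (1 - p \<phi>)) \<ge> 1) sequentially"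
    proof
      fix \<phi> assume "\<phi> \<in> set Fs"
      show "eventually (\<lambda>D::nat. 0 < p \<phi> \<longrightarrow> p \<phi> < 1 \<longrightarrow> real D * (p \<phi> * (1 - p \<phi>)) \<ge> 1) sequentially"
        using ev2[of "1 / (p \<phi> * (1 - p \<phi>))"]
      proof eventually_elim
        case (elim D)
        show ?case
        proof (intro impI)
          assume pp: "0 < p \<phi>" "p \<phi> < 1"
          then have "0 < p \<phi> * (1 - p \<phi>)" by simp
          then show "real D * (p \<phi> * (1 - p \<phi>)) \<ge> 1" using elim by (simp add: field_simps)
        qed
      qed
    qed
  qed
  have "eventually (\<lambda>D::nat. (\<theta>\<^sup>2) ^ D < 1 / (2 * (C + 1)) \<and> real D \<ge> 1 \<and> real D \<ge> 2 / e \<and>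
      (\<forall>\<phi>\<in>set Fs. 0 < p \<phi> \<longrightarrow> p \<phi> < 1 \<longrightarrow> real D * (p \<phi> * (1 - p \<phi>)) \<ge> 1)) sequentially"
    using ev1 ev2[of 1] ev2[of "2 / e"] ev3 by eventually_elim auto
  then obtain D :: nat where D: "(\<theta>\<^sup>2) ^ D < 1 / (2 * (C + 1))" "real D \<ge> 1" "real D \<ge> 2 / e"
      "\<forall>\<phi>\<in>set Fs. 0 < p \<phi> \<longrightarrow> p \<phi> < 1 \<longrightarrow> real D * (p \<phi> * (1 - p \<phi>)) \<ge> 1"
    by (auto simp: eventually_sequentially)
  have Dpos: "D > 0" using D(2) by simp
  define xs where "xs = map (\<lambda>\<phi>. (\<phi>, ch (p \<phi>) D)) Fs"
  define f where "f = (\<lambda>\<phi> z. fab (fst (ch (p \<phi>) D)) (snd (ch (p \<phi>) D)) z)"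
  have G: "prod_list (map (\<lambda>(\<phi>, a, b). t \<phi> ^ a * (1 - t \<phi>) ^ b) xs) = prod_list (map (\<lambda>\<phi>. f \<phi> (t \<phi>)) Fs)" for t
    by (simp add: xs_def f_def fab_def comp_def case_prod_beta)
  have fpos: "\<forall>\<phi>\<in>set Fs. f \<phi> (p \<phi>) > 0"
    using coord(1)[OF _ _ Dpos] p D(4) by (auto simp: f_def)
  have Gp: "prod_list (map (\<lambda>\<phi>. f \<phi> (p \<phi>)) Fs) > 0"
    by (rule prod_list_pos_map[OF fpos])
  have main: "K * prod_list (map (\<lambda>\<phi>. f \<phi> (t \<phi>)) Fs) \<le> prod_list (map (\<lambda>\<phi>. f \<phi> (p \<phi>)) Fs) / 2"
    if t: "\<forall>\<phi>\<in>set Fs. 0 \<le> t \<phi> \<and> t \<phi> \<le> 1" and far: "\<exists>\<phi>\<in>set Fs. \<bar>t \<phi> - p \<phi>\<bar> \<ge> \<epsilon>" for t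
  proof -
    let ?far = "\<lambda>\<phi>. \<bar>t \<phi> - p \<phi>\<bar> \<ge> \<epsilon>"
    define w where "w = (\<theta>\<^sup>2) ^ D"
    have w: "0 \<le> w" "w \<le> 1" using th by (auto simp: w_def power_le_one)
    have bnd: "f \<phi> (t \<phi>) \<le> exp 1 * f \<phi> (p \<phi>) * (1 - (real (fst (ch (p \<phi>) D)) / D - t \<phi>)\<^sup>2 / 8) ^ (2 * D)"
      if "\<phi> \<in> set Fs" for \<phi>
      using coord(2)[OF _ _ Dpos, of "p \<phi>" "t \<phi>"] p t D(4) that by (auto simp: f_def)
    have FP: "\<forall>\<phi>\<in>set Fs. 0 \<le> f \<phi> (t \<phi>) \<and> f \<phi> (t \<phi>) \<le> exp 1 * f \<phi> (p \<phi>) \<and> 0 \<le> f \<phi> (p \<phi>)"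
    proof
      fix \<phi> assume ph: "\<phi> \<in> set Fs"
      let ?q = "real (fst (ch (p \<phi>) D)) / D"
      have q1: "?q \<le> 1" "0 \<le> ?q"
        using ch_sum[of "p \<phi>" D] p ph Dpos by (auto simp: field_simps)
      have tt: "0 \<le> t \<phi>" "t \<phi> \<le> 1" using t ph by auto
      have "\<bar>?q - t \<phi>\<bar> \<le> 1" using q1 tt unfolding abs_le_iff by linarith
      then have sq: "(?q - t \<phi>)\<^sup>2 \<le> 1" using abs_le_square_iff[of "?q - t \<phi>" 1] by simp
      then have "(1 - (?q - t \<phi>)\<^sup>2 / 8) ^ (2 * D) \<le> 1"
        by (intro power_le_one) (auto simp: power2_eq_square)
      moreover have "0 \<le> exp 1 * f \<phi> (p \<phi>)" using fpos ph by (auto intro!: mult_nonneg_nonneg less_imp_le)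
      ultimately have "exp 1 * f \<phi> (p \<phi>) * (1 - (?q - t \<phi>)\<^sup>2 / 8) ^ (2 * D) \<le> exp 1 * f \<phi> (p \<phi>)"
        by (simp add: mult_left_le)
      then have "f \<phi> (t \<phi>) \<le> exp 1 * f \<phi> (p \<phi>)" using bnd[OF ph] by linarith
      moreover have "0 \<le> f \<phi> (t \<phi>)" using t ph by (simp add: f_def fab_def)
      ultimately show "0 \<le> f \<phi> (t \<phi>) \<and> f \<phi> (t \<phi>) \<le> exp 1 * f \<phi> (p \<phi>) \<and> 0 \<le> f \<phi> (p \<phi>)"
        using fpos ph by auto
    qed
    have farb: "\<forall>\<phi>\<in>set Fs. ?far \<phi> \<longrightarrow> f \<phi> (t \<phi>) \<le> exp 1 * f \<phi> (p \<phi>) * w"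
    proof (intro ballI impI)
      fix \<phi> assume ph: "\<phi> \<in> set Fs" and fa: "?far \<phi>"
      let ?q = "real (fst (ch (p \<phi>) D)) / D"
      have cl: "\<bar>?q - p \<phi>\<bar> \<le> 1 / D" using ch_close[OF _ _ Dpos, of "p \<phi>"] p ph by auto
      have "1 / D \<le> e / 2" using D(3) e Dpos by (simp add: field_simps)
      then have "\<bar>?q - t \<phi>\<bar> \<ge> e / 2" using cl fa e(3) by linarith
      then have "(e / 2)\<^sup>2 \<le> (?q - t \<phi>)\<^sup>2"
        using abs_le_square_iff[of "e / 2" "?q - t \<phi>"] e by simp
      then have l1: "1 - (?q - t \<phi>)\<^sup>2 / 8 \<le> \<theta>" by (simp add: \<theta>_def power2_eq_square)
      have q1: "?q \<le> 1" "0 \<le> ?q"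
        using ch_sum[of "p \<phi>" D] p ph Dpos by (auto simp: field_simps)
      have tt: "0 \<le> t \<phi>" "t \<phi> \<le> 1" using t ph by auto
      have "\<bar>?q - t \<phi>\<bar> \<le> 1" using q1 tt unfolding abs_le_iff by linarith
      then have sq: "(?q - t \<phi>)\<^sup>2 \<le> 1" using abs_le_square_iff[of "?q - t \<phi>" 1] by simp
      have l0: "0 \<le> 1 - (?q - t \<phi>)\<^sup>2 / 8" using sq by simp
      have "(1 - (?q - t \<phi>)\<^sup>2 / 8) ^ (2 * D) \<le> \<theta> ^ (2 * D)"
        by (rule power_mono[OF l1 l0])
      also have "\<dots> = w" by (simp add: w_def power_mult)
      finally have pw: "(1 - (?q - t \<phi>)\<^sup>2 / 8) ^ (2 * D) \<le> w" .
      have "0 \<le> exp 1 * f \<phi> (p \<phi>)" using fpos ph by (auto intro!: mult_nonneg_nonneg less_imp_le)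
      then have "exp 1 * f \<phi> (p \<phi>) * (1 - (?q - t \<phi>)\<^sup>2 / 8) ^ (2 * D) \<le> exp 1 * f \<phi> (p \<phi>) * w"
        by (rule mult_left_mono[OF pw])
      then show "f \<phi> (t \<phi>) \<le> exp 1 * f \<phi> (p \<phi>) * w" using bnd[OF ph] by linarith
    qed
    have pb: "prod_list (map (\<lambda>\<phi>. f \<phi> (t \<phi>)) Fs) \<le> exp 1 ^ m * prod_list (map (\<lambda>\<phi>. f \<phi> (p \<phi>)) Fs) * w"
      using prod_bound[of "exp 1" w Fs "\<lambda>\<phi>. f \<phi> (t \<phi>)" "\<lambda>\<phi>. f \<phi> (p \<phi>)" ?far] w FP farb far
      by (simp add: m_def)
    have "K * prod_list (map (\<lambda>\<phi>. f \<phi> (t \<phi>)) Fs) \<le> K * (exp 1 ^ m * prod_list (map (\<lambda>\<phi>. f \<phi> (p \<phi>)) Fs) * w)"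
      using pb K by (rule mult_left_mono)
    also have "\<dots> = (C * w) * prod_list (map (\<lambda>\<phi>. f \<phi> (p \<phi>)) Fs)" by (simp add: C_def algebra_simps)
    also have "\<dots> \<le> (1 / 2) * prod_list (map (\<lambda>\<phi>. f \<phi> (p \<phi>)) Fs)"
    proof (rule mult_right_mono)
      have "w \<le> 1 / (2 * (C + 1))" using D(1) by (simp add: w_def)
      then have "C * w \<le> C * (1 / (2 * (C + 1)))" using C0 by (rule mult_left_mono)
      also have "\<dots> \<le> 1 / 2" using C0 by (simp add: field_simps)
      finally show "C * w \<le> 1 / 2" .
    qed (use Gp in simp)
    finally show ?thesis by simp
  qed
  show ?thesis
  proof (intro exI[of _ xs] conjI allI impI)
    show "map fst xs = Fs" by (simp add: xs_def comp_def)
    show "0 < prod_list (map (\<lambda>(\<phi>, a, b). p \<phi> ^ a * (1 - p \<phi>) ^ b) xs)"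
      unfolding G by (rule Gp)
    fix t assume "\<forall>\<phi>\<in>set Fs. 0 \<le> t \<phi> \<and> t \<phi> \<le> 1" "\<exists>\<phi>\<in>set Fs. \<epsilon> \<le> \<bar>t \<phi> - p \<phi>\<bar>"
    then show "K * prod_list (map (\<lambda>(\<phi>, a, b). t \<phi> ^ a * (1 - t \<phi>) ^ b) xs)
         \<le> prod_list (map (\<lambda>(\<phi>, a, b). p \<phi> ^ a * (1 - p \<phi>) ^ b) xs) / 2"
      unfolding G by (rule main)
  qed
qed

lemma fin_prob: "finite V \<Longrightarrow> V \<noteq> {} \<Longrightarrow> prob_space (uniform_count_measure V)"
  by (rule prob_space_uniform_count_measure)

lemma stone_fin_range:
  assumes "finite V" "V \<noteq> {}"
  shows "0 \<le> stone_fin V E r \<phi>" "stone_fin V E r \<phi> \<le> 1"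
  using stone_mod_range[OF fin_prob[OF assms]] stone_fin_eq[OF assms] by metis+

lemma fin_mon:
  assumes V: "finite V" "V \<noteq> {}"
  shows "stone_fin V E r (mon xs) =
    prod_list (map (\<lambda>(\<phi>, a, b). stone_fin V E r \<phi> ^ a * (1 - stone_fin V E r \<phi>) ^ b) xs)"
  unfolding stone_fin_eq[OF V]
  by (rule stone_mon[OF fin_prob[OF V] defmeas_ucm[OF V(1)]])

lemma fin_star_le:
  assumes V: "finite V" and xi: "fv \<xi> = {x}" "graph_fm \<xi>"
  shows "stone_fin V E r' (star \<xi> x \<Psi>) \<le> (\<Sum>v\<in>{v\<in>V. sat V E undefined (\<lambda>_. v) \<xi>}. stone_fin V E v \<Psi>)"
proof -
  let ?X = "{v\<in>V. sat V E undefined (\<lambda>_. v) \<xi>}"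
  have fX: "finite ?X" using V by simp
  have "card (defset V E r' (star \<xi> x \<Psi>)) \<le> (\<Sum>v\<in>?X. card (defset V E v \<Psi>))"
    unfolding defset_star[OF xi] by (rule card_UN_le[OF fX])
  then have "real (card (defset V E r' (star \<xi> x \<Psi>))) \<le> real (\<Sum>v\<in>?X. card (defset V E v \<Psi>))"
    by (simp only: of_nat_le_iff)
  then have "real (card (defset V E r' (star \<xi> x \<Psi>))) \<le> (\<Sum>v\<in>?X. real (card (defset V E v \<Psi>)))"
    by (simp only: of_nat_sum)
  then have "real (card (defset V E r' (star \<xi> x \<Psi>))) / real (card V) ^ card (fv \<Psi>)
      \<le> (\<Sum>v\<in>?X. real (card (defset V E v \<Psi>))) / real (card V) ^ card (fv \<Psi>)"
    by (rule divide_right_mono) simp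
  then show ?thesis
    by (simp add: stone_fin_def fv_star[OF xi(1)] sum_divide_distrib)
qed

lemma mod_star_ge:
  assumes N: "prob_space N" and dm: "definable_measurable graph_fm N E undefined"
    and r: "r \<in> space N" "sat (space N) E undefined (\<lambda>_. r) \<xi>"
    and xi: "fv \<xi> = {x}" "graph_fm \<xi>"
  shows "stone_mod N E r \<Psi> \<le> stone_mod N E undefined (star \<xi> x \<Psi>)"
proof -
  interpret P: prob_space "PiM (fv \<Psi>) (\<lambda>_. N)" by (rule prob_space_PiM) (rule N)
  have sub: "defset (space N) E r \<Psi> \<subseteq> defset (space N) E undefined (star \<xi> x \<Psi>)"
    unfolding defset_star[OF xi] using r by blast
  have m: "defset (space N) E undefined (star \<xi> x \<Psi>) \<in> sets (PiM (fv \<Psi>) (\<lambda>_. N))"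
    using dm graph_star[OF xi(2), of x \<Psi>] fv_star[OF xi(1), of \<Psi>]
    unfolding definable_measurable_def by metis
  show ?thesis
    unfolding stone_mod_def fv_star[OF xi(1)]
    by (rule P.finite_measure_mono[OF sub m])
qed

lemma diagonal:
  fixes Q :: "nat \<Rightarrow> nat \<Rightarrow> 'a \<Rightarrow> bool"
  assumes ne: "\<And>n. V n \<noteq> {}"
    and anti: "\<And>m n v. Q (Suc m) n v \<Longrightarrow> Q m n v"
    and ev: "\<And>m. \<exists>N. \<forall>n\<ge>N. \<exists>v\<in>V n. Q m n v"
  shows "\<exists>rs. (\<forall>n. rs n \<in> V n) \<and> (\<forall>m. \<exists>N. \<forall>n\<ge>N. Q m n (rs n))"
proof -
  have anti': "Q m n v" if "m \<le> m'" "Q m' n v" for m m' n v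
    using that
  proof (induction m' arbitrary: m)
    case 0 then show ?case by simp
  next
    case (Suc m')
    show ?case
    proof (cases "m = Suc m'")
      case True then show ?thesis using Suc by simp
    next
      case False then have "m \<le> m'" using Suc by simp
      then show ?thesis using Suc anti by blast
    qed
  qed
  obtain N where N: "\<And>m n. n \<ge> N m \<Longrightarrow> \<exists>v\<in>V n. Q m n v"
    using ev by metis
  define good where "good n m = (\<exists>v\<in>V n. Q m n v)" for n m
  define mn where "mn n = Max {m. m \<le> n \<and> good n m}" for n
  define rs where "rs n = (if \<exists>m\<le>n. good n m then (SOME v. v \<in> V n \<and> Q (mn n) n v) else (SOME v. v \<in> V n))" for n
  have fin: "finite {m. m \<le> n \<and> good n m}" for n by simp
  have rsV: "rs n \<in> V n \<and> ((\<exists>m\<le>n. good n m) \<longrightarrow> Q (mn n) n (rs n))" for n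
  proof (cases "\<exists>m\<le>n. good n m")
    case True
    then have "mn n \<in> {m. m \<le> n \<and> good n m}" unfolding mn_def
      by (intro Max_in[OF fin]) auto
    then have "\<exists>v. v \<in> V n \<and> Q (mn n) n v" by (auto simp: good_def)
    then have "(SOME v. v \<in> V n \<and> Q (mn n) n v) \<in> V n \<and> Q (mn n) n (SOME v. v \<in> V n \<and> Q (mn n) n v)"
      by (rule someI_ex)
    then have "rs n \<in> V n \<and> Q (mn n) n (rs n)"
      using True unfolding rs_def by simp
    then show ?thesis by simp
  next
    case False
    then have "rs n = (SOME v. v \<in> V n)" unfolding rs_def by (simp only: if_False)
    then have "rs n \<in> V n" using ne[of n] by (simp add: some_in_eq)
    then show ?thesis using False by blast
  qed
  show ?thesis
  proof (intro exI[of _ rs] conjI allI)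
    show "rs n \<in> V n" for n using rsV by blast
    fix m
    show "\<exists>K. \<forall>n\<ge>K. Q m n (rs n)"
    proof (intro exI[of _ "max m (N m)"] allI impI)
      fix n assume n: "max m (N m) \<le> n"
      then have gm: "good n m" using N[of m n] by (simp add: good_def)
      then have ex: "\<exists>m\<le>n. good n m" using n by auto
      have "m \<le> mn n" unfolding mn_def by (rule Max_ge[OF fin]) (use gm n in auto)
      moreover have "Q (mn n) n (rs n)" using rsV ex by blast
      ultimately show "Q m n (rs n)" by (rule anti')
    qed
  qed
qed

instance tm :: countable by countable_datatype
instance fm :: countable by countable_datatype

theorem theorem2:
  fixes V :: "nat \<Rightarrow> 'a set" and E :: "nat \<Rightarrow> 'a \<Rightarrow> 'a \<Rightarrow> bool"
    and M :: "('b::polish_space) measure" and EL :: "'b \<Rightarrow> 'b \<Rightarrow> bool"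
    and \<xi> :: fm and x :: nat
  assumes fin: "\<And>n. finite (V n)" and ne: "\<And>n. V n \<noteq> {}"
    and gr: "\<And>n. is_graph (V n) (E n)"
    and conv: "\<And>\<phi>. graph_fm \<phi> \<Longrightarrow> convergent (\<lambda>n. stone_fin (V n) (E n) undefined \<phi>)"
    and modeling: "is_modeling M EL"
    and limit: "\<And>\<phi>. graph_fm \<phi> \<Longrightarrow>
        (\<lambda>n. stone_fin (V n) (E n) undefined \<phi>) \<longlonglongrightarrow> stone_mod M EL undefined \<phi>"
    and xi_graph: "graph_fm \<xi>" and xi_fv: "fv \<xi> = {x}"
    and algebraic: "finite {v \<in> space M. sat (space M) EL undefined (\<lambda>_. v) \<xi>}"
    and xi_ne: "{v \<in> space M. sat (space M) EL undefined (\<lambda>_. v) \<xi>} \<noteq> {}"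
  shows "\<exists>rs r. (\<forall>n. rs n \<in> V n)
     \<and> r \<in> space M \<and> sat (space M) EL undefined (\<lambda>_. r) \<xi>
     \<and> definable_measurable (\<lambda>_. True) M EL r
     \<and> (\<forall>\<phi>. (\<lambda>n. stone_fin (V n) (E n) (rs n) \<phi>) \<longlonglongrightarrow> stone_mod M EL r \<phi>)"
proof -
  let ?S = "space M"
  define XL where "XL = {v \<in> ?S. sat ?S EL undefined (\<lambda>_. v) \<xi>}"
  have Mp: "prob_space M" and dmg: "definable_measurable graph_fm M EL undefined"
    using modeling by (auto simp: is_modeling_def)
  obtain r where r: "r \<in> XL" using xi_ne unfolding XL_def by blast
  have rS: "r \<in> ?S" and rxi: "sat ?S EL undefined (\<lambda>_. r) \<xi>" using r by (auto simp: XL_def)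
  have dmr: "definable_measurable (\<lambda>_. True) M EL r" by (rule defmeas_root[OF dmg rS])
  define k where "k = card XL"
  have k1: "k \<ge> 1"
  proof -
    have "finite XL" "XL \<noteq> {}" using algebraic xi_ne by (auto simp: XL_def)
    then show ?thesis by (simp add: k_def Suc_le_eq card_gt_0_iff)
  qed
  define p where "p \<phi> = stone_mod M EL r \<phi>" for \<phi>
  have p01: "0 \<le> p \<phi> \<and> p \<phi> \<le> 1" for \<phi> using stone_mod_range[OF Mp] by (simp add: p_def)
  define X where "X n = {v \<in> V n. sat (V n) (E n) undefined (\<lambda>_. v) \<xi>}" for n
  have t01: "0 \<le> stone_fin (V n) (E n) v \<phi> \<and> stone_fin (V n) (E n) v \<phi> \<le> 1" for n v \<phi>
    using stone_fin_range[OF fin ne] by simp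

  have evk: "\<exists>N. \<forall>n\<ge>N. card (X n) \<le> k"
  proof -
    have g: "graph_fm (AM \<xi> x k)" by (rule graph_AM[OF xi_graph])
    have f0: "fv (AM \<xi> x k) = {}" by (rule fv_AM[OF xi_fv])
    have "sat ?S EL undefined (\<lambda>_. undefined) (AM \<xi> x k)"
      using sat_AM[OF xi_fv xi_graph algebraic] by (simp add: k_def XL_def)
    then have "stone_mod M EL undefined (AM \<xi> x k) = 1"
      by (simp add: stone_mod_sentence[OF f0])
    then have "(\<lambda>n. stone_fin (V n) (E n) undefined (AM \<xi> x k)) \<longlonglongrightarrow> 1"
      using limit[OF g] by simp
    then obtain N where N: "\<forall>n\<ge>N. dist (stone_fin (V n) (E n) undefined (AM \<xi> x k)) 1 < 1 / 2"
      unfolding LIMSEQ_def by (meson half_gt_zero_iff zero_less_one)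
    show ?thesis
    proof (intro exI[of _ N] allI impI)
      fix n assume "N \<le> n"
      then have "dist (stone_fin (V n) (E n) undefined (AM \<xi> x k)) 1 < 1 / 2" using N by blast
      then have "sat (V n) (E n) undefined (\<lambda>_. undefined) (AM \<xi> x k)"
        by (cases "sat (V n) (E n) undefined (\<lambda>_. undefined) (AM \<xi> x k)")
           (auto simp: stone_fin_sentence[OF f0] dist_real_def)
      then show "card (X n) \<le> k"
        using sat_AM[OF xi_fv xi_graph, of "V n" "E n" undefined "\<lambda>_. undefined" k] fin[of n]
        by (simp add: X_def)
    qed
  qed

  have good: "\<exists>N. \<forall>n\<ge>N. \<exists>v\<in>V n. \<forall>\<phi>\<in>set Fs. \<bar>stone_fin (V n) (E n) v \<phi> - p \<phi>\<bar> < \<epsilon>"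
    if \<epsilon>: "\<epsilon> > 0" for Fs \<epsilon>
  proof (rule ccontr)
    assume nG: "\<not> (\<exists>N. \<forall>n\<ge>N. \<exists>v\<in>V n. \<forall>\<phi>\<in>set Fs. \<bar>stone_fin (V n) (E n) v \<phi> - p \<phi>\<bar> < \<epsilon>)"
    define G where "G xs t = prod_list (map (\<lambda>(\<phi>, a, b). t \<phi> ^ a * (1 - t \<phi>) ^ b) xs)"
      for xs :: "(fm \<times> nat \<times> nat) list" and t :: "fm \<Rightarrow> real"
    obtain xs where xs: "map fst xs = Fs" and Gp: "G xs p > 0"
      and bnd: "\<And>t. (\<forall>\<phi>\<in>set Fs. 0 \<le> t \<phi> \<and> t \<phi> \<le> 1) \<Longrightarrow> (\<exists>\<phi>\<in>set Fs. \<bar>t \<phi> - p \<phi>\<bar> \<ge> \<epsilon>) \<Longrightarrow>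
          real k * G xs t \<le> G xs p / 2"
      using multi[of Fs p \<epsilon> "real k"] p01 \<epsilon> unfolding G_def by auto
    define \<Psi> where "\<Psi> = mon xs"
    have L\<Psi>: "stone_mod M EL r \<Psi> = G xs p"
      using stone_mon[OF Mp dmr, of xs] by (simp add: \<Psi>_def p_def G_def)
    have U: "G xs p \<le> stone_mod M EL undefined (star \<xi> x \<Psi>)"
      using mod_star_ge[OF Mp dmg rS rxi xi_fv xi_graph, of \<Psi>] L\<Psi> by simp
    have limU: "(\<lambda>n. stone_fin (V n) (E n) undefined (star \<xi> x \<Psi>)) \<longlonglongrightarrow> stone_mod M EL undefined (star \<xi> x \<Psi>)"
      by (rule limit[OF graph_star[OF xi_graph]])
    then obtain N1 where N1: "\<forall>n\<ge>N1. dist (stone_fin (V n) (E n) undefined (star \<xi> x \<Psi>)) (stone_mod M EL undefined (star \<xi> x \<Psi>)) < G xs p / 2"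
      unfolding LIMSEQ_def using Gp by (meson half_gt_zero_iff)
    obtain N2 where N2: "\<forall>n\<ge>N2. card (X n) \<le> k" using evk by blast
    obtain n where n: "n \<ge> max N1 N2" and bad: "\<not> (\<exists>v\<in>V n. \<forall>\<phi>\<in>set Fs. \<bar>stone_fin (V n) (E n) v \<phi> - p \<phi>\<bar> < \<epsilon>)"
      using nG by blast
    have big: "stone_fin (V n) (E n) undefined (star \<xi> x \<Psi>) > G xs p / 2"
    proof -
      have "n \<ge> N1" using n by simp
      then have "\<bar>stone_fin (V n) (E n) undefined (star \<xi> x \<Psi>) - stone_mod M EL undefined (star \<xi> x \<Psi>)\<bar> < G xs p / 2"
        using N1 unfolding dist_real_def by blast
      then show ?thesis using U by linarith
    qed
    have each: "stone_fin (V n) (E n) v \<Psi> \<le> G xs p / (2 * real k)" if v: "v \<in> X n" for v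
    proof -
      let ?t = "\<lambda>\<phi>. stone_fin (V n) (E n) v \<phi>"
      have "v \<in> V n" using v by (simp add: X_def)
      then have far: "\<exists>\<phi>\<in>set Fs. \<bar>?t \<phi> - p \<phi>\<bar> \<ge> \<epsilon>" using bad by (auto simp: not_less)
      have "real k * G xs ?t \<le> G xs p / 2" by (rule bnd[OF _ far]) (use t01 in auto)
      moreover have "stone_fin (V n) (E n) v \<Psi> = G xs ?t"
        unfolding \<Psi>_def G_def by (rule fin_mon[OF fin ne])
      ultimately show ?thesis using k1 by (simp add: field_simps)
    qed
    have "stone_fin (V n) (E n) undefined (star \<xi> x \<Psi>) \<le> (\<Sum>v\<in>X n. stone_fin (V n) (E n) v \<Psi>)"
      unfolding X_def by (rule fin_star_le[OF fin xi_fv xi_graph])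
    also have "\<dots> \<le> (\<Sum>v\<in>X n. G xs p / (2 * real k))"
      by (rule sum_mono) (rule each)
    also have "\<dots> = real (card (X n)) * (G xs p / (2 * real k))" by simp
    also have "\<dots> \<le> real k * (G xs p / (2 * real k))"
      using N2 n Gp k1 by (intro mult_right_mono) auto
    also have "\<dots> = G xs p / 2" using k1 by simp
    finally show False using big by simp
  qed

  define Q where "Q m n v = (\<forall>j<m. \<bar>stone_fin (V n) (E n) v (from_nat j) - p (from_nat j)\<bar> < 1 / (real m + 1))"
    for m n v
  have anti: "Q m n v" if "Q (Suc m) n v" for m n v
  proof -
    have "1 / (real (Suc m) + 1) \<le> 1 / (real m + 1)" by (simp add: frac_le)
    then show ?thesis using that unfolding Q_def by (meson less_Suc_eq less_le_trans)
  qed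
  have ev: "\<exists>N. \<forall>n\<ge>N. \<exists>v\<in>V n. Q m n v" for m
  proof -
    obtain N where N: "\<forall>n\<ge>N. \<exists>v\<in>V n. \<forall>\<phi>\<in>set (map from_nat [0..<m]). \<bar>stone_fin (V n) (E n) v \<phi> - p \<phi>\<bar> < 1 / (real m + 1)"
      using good[of "1 / (real m + 1)" "map from_nat [0..<m]"] by auto
    show ?thesis
    proof (intro exI[of _ N] allI impI)
      fix n assume "N \<le> n"
      then obtain v where v: "v \<in> V n"
        "\<forall>\<phi>\<in>set (map from_nat [0..<m]). \<bar>stone_fin (V n) (E n) v \<phi> - p \<phi>\<bar> < 1 / (real m + 1)"
        using N by blast
      have "Q m n v" unfolding Q_def
      proof (intro allI impI)
        fix j assume "j < m"
        then have "from_nat j \<in> set (map from_nat [0..<m])" by simp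
        then show "\<bar>stone_fin (V n) (E n) v (from_nat j) - p (from_nat j)\<bar> < 1 / (real m + 1)"
          using v(2) by blast
      qed
      then show "\<exists>v\<in>V n. Q m n v" using v(1) by blast
    qed
  qed
  obtain rs where rs: "\<forall>n. rs n \<in> V n" and rsQ: "\<forall>m. \<exists>N. \<forall>n\<ge>N. Q m n (rs n)"
    using diagonal[of V Q, OF ne anti ev] by blast
  have conv_all: "(\<lambda>n. stone_fin (V n) (E n) (rs n) \<phi>) \<longlonglongrightarrow> stone_mod M EL r \<phi>" for \<phi>
  proof (rule LIMSEQ_I)
    fix \<delta> :: real assume \<delta>: "0 < \<delta>"
    define m where "m = max (Suc (to_nat \<phi>)) (nat \<lceil>1 / \<delta>\<rceil>)"
    have m1: "to_nat \<phi> < m" by (simp add: m_def)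
    have "1 / \<delta> \<le> real m" unfolding m_def by linarith
    then have "1 / \<delta> < real m + 1" by simp
    then have m2: "1 / (real m + 1) < \<delta>" using \<delta> by (simp add: field_simps)
    obtain N where N: "\<forall>n\<ge>N. Q m n (rs n)" using rsQ by blast
    show "\<exists>no. \<forall>n\<ge>no. norm (stone_fin (V n) (E n) (rs n) \<phi> - stone_mod M EL r \<phi>) < \<delta>"
    proof (intro exI[of _ N] allI impI)
      fix n assume "N \<le> n"
      then have "Q m n (rs n)" using N by blast
      then have "\<bar>stone_fin (V n) (E n) (rs n) (from_nat (to_nat \<phi>)) - p (from_nat (to_nat \<phi>))\<bar> < 1 / (real m + 1)"
        using m1 unfolding Q_def by blast
      then show "norm (stone_fin (V n) (E n) (rs n) \<phi> - stone_mod M EL r \<phi>) < \<delta>"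
        using m2 by (simp add: p_def)
    qed
  qed
  show ?thesis
    using rs rS rxi dmr conv_all by blast
qed

end
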